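(* Assume (i) consistency: $Y=Y^a$ whenever $A=a$; (ii) treatment positivity: $\pi_a(\mathbf X)>0$ a.s. under $\mathbb P(\cdot\mid S=1)$ for all $a$; (iii) selection positivity: $\rho(\mathbf V)>0$ a.s.; (iv) there is a constant $\delta_1>0$ with $\big|\mathbb E[Y^a\mid \mathbf X,A=1,S=1]-\mathbb E[Y^a\mid\mathbf X,A=0,S=1]\big|\le\delta_1$ a.s. for all $a$; (v) there is a constant $\delta_2>0$ with $\big|\mathbb E[Y^a\mid \mathbf V,S=0]-\mathbb E[Y^a\mid \mathbf V,S=1]\big|\le\delta_2$ a.s. for all $a$. Then for each $a\in\{0,1\}$, $$\psi_a\in\Big[\mathbb E[\tau_a(\mathbf V)]-\delta_1\mathbb E[\mathbb P(A=1-a\mid \mathbf V,S=1)]-\delta_2\mathbb P(S=0),\ \mathbb E[\tau_a(\mathbf V)]+\delta_1\mathbb E[\mathbb P(A=1-a\mid \mathbf V,S=1)]+\delta_2\mathbb P(S=0)\Big],$$ $$\theta_a\in\Big[\mathbb E[\tau_a(\mathbf V)\mid S=0]-\delta_1\mathbb E[\mathbb P(A=1-a\mid\mathbf V,S=1)\mid S=0]-\delta_2,\ \mathbb E[\tau_a(\mathbf V)\mid S=0]+\delta_1\mathbb E[\mathbb P(A=1-a\mid\mathbf V,S=1)\mid S=0]+\delta_2\Big].$$ Consequently $$\psi_1-\psi_0\in\big[\mathbb E[\tau_1(\mathbf V)-\tau_0(\mathbf V)]-\delta_1-2\delta_2\mathbb P(S=0),\ \mathbb E[\tau_1(\mathbf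 V)-\tau_0(\mathbf V)]+\delta_1+2\delta_2\mathbb P(S=0)\big],$$ $$\theta_1-\theta_0\in\big[\mathbb E[\tau_1(\mathbf V)-\tau_0(\mathbf V)\mid S=0]-\delta_1-2\delta_2,\ \mathbb E[\tau_1(\mathbf V)-\tau_0(\mathbf V)\mid S=0]+\delta_1+2\delta_2\big].$$
   Context: Let $(\mathbf X,A,Y,S)$ be a random vector with covariates $\mathbf X\in\mathbb R^d$, binary treatment $A\in\{0,1\}$, real outcome $Y$, and source indicator $S\in\{0,1\}$ with $\mathbb P(S=0)>0$. $\mathbf V$ is a sub-vector of $\mathbf X$. $Y^a$ ($a\in\{0,1\}$) are integrable potential outcomes. Nuisance functions: $\pi_a(\mathbf x)=\mathbb P(A=a\mid \mathbf X=\mathbf x,S=1)$, $\rho(\mathbf v)=\mathbb P(S=1\mid \mathbf V=\mathbf v)$, $\mu_a(\mathbf x)=\mathbb E[Y\mid \mathbf X=\mathbf x,A=a,S=1]$, $\tau_a(\mathbf v)=\mathbb E[\mu_a(\mathbf X)\mid \mathbf V=\mathbf v,S=1]$. Targets: $\psi_a=\mathbb E[Y^a]$, $\theta_a=\mathbb E[Y^a\mid S=0]$. *)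

theory Defs
  imports "HOL-Probability.Probability"
begin

definition condM :: "'a measure \<Rightarrow> ('a \<Rightarrow> bool) \<Rightarrow> 'a measure" where
  "condM M P = uniform_measure M {\<omega> \<in> space M. P \<omega>}"

definition is_cond_exp_fn ::
  "'a measure \<Rightarrow> ('a \<Rightarrow> real) \<Rightarrow> ('a \<Rightarrow> 'b) \<Rightarrow> 'b measure \<Rightarrow> ('b \<Rightarrow> real) \<Rightarrow> bool" where
  "is_cond_exp_fn N f Z MZ h \<longleftrightarrow>
     integrable N f \<and> Z \<in> measurable N MZ \<and> h \<in> borel_measurable MZ \<and>
     integrable N (\<lambda>\<omega>. h (Z \<omega>)) \<and>
     (\<forall>B \<in> sets MZ.
        (\<integral>\<omega>. indicator (Z -` B \<inter> space N) \<omega> * f \<omega> \<partial>N) =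
        (\<integral>\<omega>. indicator (Z -` B \<inter> space N) \<omega> * h (Z \<omega>) \<partial>N))"

end

theory Submission imports Defs begin

lemma condM_density:
  assumes M: "prob_space M" and P: "Measurable.pred M P"
    and pos: "measure M {\<omega>\<in>space M. P \<omega>} > 0"
  shows "condM M P = density M (\<lambda>\<omega>. ennreal (indicator {\<omega>\<in>space M. P \<omega>} \<omega> / measure M {\<omega>\<in>space M. P \<omega>}))"
proof -
  interpret prob_space M by fact
  have "emeasure M {\<omega>\<in>space M. P \<omega>} = ennreal (measure M {\<omega>\<in>space M. P \<omega>})"
    by (simp add: emeasure_eq_measure)
  then show ?thesis
    unfolding condM_def uniform_measure_def
    by (intro arg_cong[where f="density M"] ext) (auto simp: indicator_def divide_ennreal[of 1, simplified] pos)
qed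

lemma condM_measurable_eq: "measurable (condM M P) N = measurable M N"
  unfolding condM_def by (rule measurable_cong_sets) simp_all

lemma condM_meas: "f \<in> borel_measurable (condM M P) \<longleftrightarrow> f \<in> borel_measurable M"
  by (simp only: condM_measurable_eq)

lemma condM_measurable: "Z \<in> measurable (condM M P) N \<longleftrightarrow> Z \<in> measurable M N"
  by (simp only: condM_measurable_eq)

lemma condM_space[simp]: "space (condM M P) = space M"
  unfolding condM_def by simp

lemma condM_sets[simp]: "sets (condM M P) = sets M"
  unfolding condM_def by simp

lemma condM_int:
  fixes f :: "'a \<Rightarrow> real"
  assumes M: "prob_space M" and P: "Measurable.pred M P"
    and pos: "measure M {\<omega>\<in>space M. P \<omega>} > 0" and f: "f \<in> borel_measurable M"
  shows "integral\<^sup>L (condM M P) f = (\<integral>\<omega>. indicator {\<omega>\<in>space M. P \<omega>} \<omega> * f \<omega> \<partial>M) / measure M {\<omega>\<in>space M. P \<omega>}"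
    and "integrable (condM M P) f \<longleftrightarrow> integrable M (\<lambda>\<omega>. indicator {\<omega>\<in>space M. P \<omega>} \<omega> * f \<omega>)"
proof -
  let ?E = "{\<omega>\<in>space M. P \<omega>}"
  have E: "?E \<in> sets M" using P by measurable
  have g: "(\<lambda>\<omega>. indicator ?E \<omega> / measure M ?E) \<in> borel_measurable M" using E by measurable
  have nn: "AE \<omega> in M. 0 \<le> indicator ?E \<omega> / measure M ?E" using pos by auto
  show "integral\<^sup>L (condM M P) f = (\<integral>\<omega>. indicator ?E \<omega> * f \<omega> \<partial>M) / measure M ?E"
    unfolding condM_density[OF M P pos] integral_real_density[OF g nn f]
    by simp
  have "integrable (condM M P) f \<longleftrightarrow> integrable M (\<lambda>\<omega>. indicator ?E \<omega> / measure M ?E * f \<omega>)"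
    unfolding condM_density[OF M P pos] integrable_real_density[OF g nn f] ..
  also have "\<dots> \<longleftrightarrow> integrable M (\<lambda>\<omega>. (1 / measure M ?E) * (indicator ?E \<omega> * f \<omega>))"
    by (intro arg_cong[where f="integrable M"] ext) simp
  also have "\<dots> \<longleftrightarrow> integrable M (\<lambda>\<omega>. indicator ?E \<omega> * f \<omega>)"
    using pos by (subst integrable_mult_left_iff) simp
  finally show "integrable (condM M P) f \<longleftrightarrow> integrable M (\<lambda>\<omega>. indicator ?E \<omega> * f \<omega>)" .
qed

lemma condM_AE:
  assumes M: "prob_space M" and P: "Measurable.pred M P"
    and pos: "measure M {\<omega>\<in>space M. P \<omega>} > 0"
  shows "(AE \<omega> in condM M P. Q \<omega>) \<longleftrightarrow> (AE \<omega> in M. P \<omega> \<longrightarrow> Q \<omega>)"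
proof -
  interpret prob_space M by fact
  have "(AE \<omega> in condM M P. Q \<omega>) \<longleftrightarrow> (AE \<omega> in M. \<omega> \<in> {\<omega>\<in>space M. P \<omega>} \<longrightarrow> Q \<omega>)"
    unfolding condM_def using pos
    by (intro AE_uniform_measure) (auto simp: emeasure_eq_measure)
  also have "\<dots> \<longleftrightarrow> (AE \<omega> in M. P \<omega> \<longrightarrow> Q \<omega>)"
    by (intro AE_cong) auto
  finally show ?thesis .
qed

lemma condM_prob:
  assumes M: "prob_space M" and P: "Measurable.pred M P"
    and pos: "measure M {\<omega>\<in>space M. P \<omega>} > 0"
  shows "prob_space (condM M P)"
proof -
  interpret prob_space M by fact
  show ?thesis unfolding condM_def using pos
    by (intro prob_space_uniform_measure) (auto simp: emeasure_eq_measure)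
qed

lemma intI:
  fixes f :: "'a \<Rightarrow> real"
  shows "A \<in> sets M \<Longrightarrow> integrable M f \<Longrightarrow> integrable M (\<lambda>x. indicator A x * f x)"
  using integrable_mult_indicator[of A M f] by simp

lemma ae_le_from_sets:
  fixes g k :: "'b \<Rightarrow> real"
  assumes Z: "Z \<in> measurable M N" and g: "g \<in> borel_measurable N" and k: "k \<in> borel_measurable N"
    and E: "E \<in> sets M"
    and ig: "integrable M (\<lambda>\<omega>. indicator E \<omega> * g (Z \<omega>))"
    and ik: "integrable M (\<lambda>\<omega>. indicator E \<omega> * k (Z \<omega>))"
    and le: "\<forall>B\<in>sets N. (\<integral>\<omega>. indicator E \<omega> * (indicator (Z -` B \<inter> space M) \<omega> * g (Z \<omega>)) \<partial>M)
                   \<le> (\<integral>\<omega>. indicator E \<omega> * (indicator (Z -` B \<inter> space M) \<omega> * k (Z \<omega>)) \<partial>M)"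
  shows "AE \<omega> in M. \<omega> \<in> E \<longrightarrow> g (Z \<omega>) \<le> k (Z \<omega>)"
proof -
  define B where "B = {x\<in>space N. k x < g x}"
  have B: "B \<in> sets N" unfolding B_def using g k by measurable
  have ZB: "Z -` B \<inter> space M \<in> sets M" using Z B by (rule measurable_sets)
  define h where "h = (\<lambda>\<omega>. indicator E \<omega> * (indicator (Z -` B \<inter> space M) \<omega> * g (Z \<omega>))
     - indicator E \<omega> * (indicator (Z -` B \<inter> space M) \<omega> * k (Z \<omega>)))"
  have i1: "integrable M (\<lambda>\<omega>. indicator E \<omega> * (indicator (Z -` B \<inter> space M) \<omega> * g (Z \<omega>)))"
    using intI[OF ZB ig] by (simp add: ac_simps)
  have i2: "integrable M (\<lambda>\<omega>. indicator E \<omega> * (indicator (Z -` B \<inter> space M) \<omega> * k (Z \<omega>)))"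
    using intI[OF ZB ik] by (simp add: ac_simps)
  have ih: "integrable M h" unfolding h_def using i1 i2 by simp
  have nn: "\<forall>\<omega>. 0 \<le> h \<omega>"
    unfolding h_def B_def by (auto split: split_indicator)
  have "integral\<^sup>L M h \<le> 0"
    unfolding h_def using le B i1 i2 by (simp add: Bochner_Integration.integral_diff)
  moreover have "integral\<^sup>L M h \<ge> 0" using nn by (simp add: integral_nonneg_AE)
  ultimately have "integral\<^sup>L M h = 0" by simp
  then have "AE \<omega> in M. h \<omega> = 0"
    using integral_nonneg_eq_0_iff_AE[OF ih] nn by simp
  moreover have "AE \<omega> in M. \<omega> \<in> space M" by (rule AE_space)
  ultimately show ?thesis
  proof eventually_elim
    case (elim \<omega>)
    have Zs: "Z \<omega> \<in> space N" using Z elim(2) by (rule measurable_space)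
    show ?case
    proof (rule impI, rule ccontr)
      assume wE: "\<omega> \<in> E" and nle: "\<not> g (Z \<omega>) \<le> k (Z \<omega>)"
      have "\<omega> \<in> Z -` B \<inter> space M" using Zs nle elim(2) by (simp add: B_def)
      then have "h \<omega> = g (Z \<omega>) - k (Z \<omega>)" using wE by (simp add: h_def)
      with elim(1) nle show False by simp
    qed
  qed
qed

lemma ae_transfer:
  fixes r :: "'b \<Rightarrow> real"
  assumes N0: "prob_space N0" and Z: "Z \<in> measurable N0 N" and r: "r \<in> borel_measurable N"
    and C: "{\<omega>\<in>space N0. C \<omega>} \<in> sets N0"
    and ir: "integrable N0 (\<lambda>\<omega>. r (Z \<omega>))"
    and eq: "\<forall>B\<in>sets N. (\<integral>\<omega>. indicator (Z -` B \<inter> space N0) \<omega> * (if C \<omega> then 1 else 0) \<partial>N0)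
               = (\<integral>\<omega>. indicator (Z -` B \<inter> space N0) \<omega> * r (Z \<omega>) \<partial>N0)"
    and pos: "AE \<omega> in N0. r (Z \<omega>) > 0"
    and Qm: "{x\<in>space N. \<not> Q x} \<in> sets N"
    and hyp: "AE \<omega> in N0. C \<omega> \<longrightarrow> Q (Z \<omega>)"
  shows "AE \<omega> in N0. Q (Z \<omega>)"
proof -
  define B where "B = {x\<in>space N. \<not> Q x}"
  have B: "B \<in> sets N" unfolding B_def by (rule Qm)
  have ZB: "Z -` B \<inter> space N0 \<in> sets N0" using Z B by (rule measurable_sets)
  have "(\<integral>\<omega>. indicator (Z -` B \<inter> space N0) \<omega> * (if C \<omega> then 1 else 0::real) \<partial>N0) = 0"
  proof (rule integral_eq_zero_AE)
    show "AE \<omega> in N0. indicator (Z -` B \<inter> space N0) \<omega> * (if C \<omega> then 1 else 0) = (0::real)"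
      using hyp by eventually_elim (auto simp: B_def split: split_indicator)
  qed
  with eq B have z: "(\<integral>\<omega>. indicator (Z -` B \<inter> space N0) \<omega> * r (Z \<omega>) \<partial>N0) = 0" by simp
  have ih: "integrable N0 (\<lambda>\<omega>. indicator (Z -` B \<inter> space N0) \<omega> * r (Z \<omega>))"
    using intI[OF ZB ir] .
  have nn: "AE \<omega> in N0. 0 \<le> indicator (Z -` B \<inter> space N0) \<omega> * r (Z \<omega>)"
    using pos by eventually_elim (auto split: split_indicator)
  have "AE \<omega> in N0. indicator (Z -` B \<inter> space N0) \<omega> * r (Z \<omega>) = 0"
    using integral_nonneg_eq_0_iff_AE[OF ih nn] z by simp
  moreover have "AE \<omega> in N0. \<omega> \<in> space N0" by (rule AE_space)
  ultimately show ?thesis using pos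
  proof eventually_elim
    case (elim \<omega>)
    have "Z \<omega> \<in> space N" using Z elim(2) by (rule measurable_space)
    show ?case
    proof (rule ccontr)
      assume nQ: "\<not> Q (Z \<omega>)"
      have "\<omega> \<in> Z -` B \<inter> space N0" using \<open>Z \<omega> \<in> space N\<close> nQ elim(2) by (simp add: B_def)
      then have "r (Z \<omega>) = 0" using elim(1) by simp
      with elim(3) show False by simp
    qed
  qed
qed

lemma cefM:
  fixes f :: "'a \<Rightarrow> real" and h :: "'b \<Rightarrow> real"
  assumes M: "prob_space M" and P: "Measurable.pred M P"
    and pos: "measure M {\<omega>\<in>space M. P \<omega>} > 0"
    and c: "is_cond_exp_fn (condM M P) f Z MZ h"
  shows "integrable M (\<lambda>\<omega>. indicator {\<omega>\<in>space M. P \<omega>} \<omega> * f \<omega>)"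
    and "Z \<in> measurable M MZ" and "h \<in> borel_measurable MZ"
    and "f \<in> borel_measurable M"
    and "integrable M (\<lambda>\<omega>. indicator {\<omega>\<in>space M. P \<omega>} \<omega> * h (Z \<omega>))"
    and "\<forall>B\<in>sets MZ.
        (\<integral>\<omega>. indicator {\<omega>\<in>space M. P \<omega>} \<omega> * (indicator (Z -` B \<inter> space M) \<omega> * f \<omega>) \<partial>M) =
        (\<integral>\<omega>. indicator {\<omega>\<in>space M. P \<omega>} \<omega> * (indicator (Z -` B \<inter> space M) \<omega> * h (Z \<omega>)) \<partial>M)"
proof -
  let ?E = "{\<omega>\<in>space M. P \<omega>}"
  have i1: "integrable (condM M P) f" and Z: "Z \<in> measurable (condM M P) MZ"
    and hm: "h \<in> borel_measurable MZ" and i2: "integrable (condM M P) (\<lambda>\<omega>. h (Z \<omega>))"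
    and eq: "\<forall>B \<in> sets MZ. (\<integral>\<omega>. indicator (Z -` B \<inter> space (condM M P)) \<omega> * f \<omega> \<partial>condM M P) =
        (\<integral>\<omega>. indicator (Z -` B \<inter> space (condM M P)) \<omega> * h (Z \<omega>) \<partial>condM M P)"
    using c unfolding is_cond_exp_fn_def by blast+
  have fm: "f \<in> borel_measurable M" using borel_measurable_integrable[OF i1] condM_meas by blast
  have ZM: "Z \<in> measurable M MZ" using Z condM_measurable by blast
  have hZ: "(\<lambda>\<omega>. h (Z \<omega>)) \<in> borel_measurable M" using ZM hm by (rule measurable_compose)
  show "integrable M (\<lambda>\<omega>. indicator ?E \<omega> * f \<omega>)" using condM_int(2)[OF M P pos fm] i1 by blast
  show "Z \<in> measurable M MZ" by fact
  show "h \<in> borel_measurable MZ" by fact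
  show "f \<in> borel_measurable M" by fact
  show "integrable M (\<lambda>\<omega>. indicator ?E \<omega> * h (Z \<omega>))" using condM_int(2)[OF M P pos hZ] i2 by blast
  show "\<forall>B\<in>sets MZ.
        (\<integral>\<omega>. indicator ?E \<omega> * (indicator (Z -` B \<inter> space M) \<omega> * f \<omega>) \<partial>M) =
        (\<integral>\<omega>. indicator ?E \<omega> * (indicator (Z -` B \<inter> space M) \<omega> * h (Z \<omega>)) \<partial>M)"
  proof
    fix B assume B: "B \<in> sets MZ"
    have ZB: "Z -` B \<inter> space M \<in> sets M" using ZM B by (rule measurable_sets)
    have m1: "(\<lambda>\<omega>. indicator (Z -` B \<inter> space M) \<omega> * f \<omega>) \<in> borel_measurable M"
      using ZB fm by (intro borel_measurable_times borel_measurable_indicator)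
    have m2: "(\<lambda>\<omega>. indicator (Z -` B \<inter> space M) \<omega> * h (Z \<omega>)) \<in> borel_measurable M"
      using ZB hZ by (intro borel_measurable_times borel_measurable_indicator)
    from eq B have "(\<integral>\<omega>. indicator (Z -` B \<inter> space M) \<omega> * f \<omega> \<partial>condM M P) =
        (\<integral>\<omega>. indicator (Z -` B \<inter> space M) \<omega> * h (Z \<omega>) \<partial>condM M P)" by simp
    then have "(\<integral>\<omega>. indicator ?E \<omega> * (indicator (Z -` B \<inter> space M) \<omega> * f \<omega>) \<partial>M) / measure M ?E =
        (\<integral>\<omega>. indicator ?E \<omega> * (indicator (Z -` B \<inter> space M) \<omega> * h (Z \<omega>)) \<partial>M) / measure M ?E"
      unfolding condM_int(1)[OF M P pos m1] condM_int(1)[OF M P pos m2] .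
    then show "(\<integral>\<omega>. indicator ?E \<omega> * (indicator (Z -` B \<inter> space M) \<omega> * f \<omega>) \<partial>M) =
        (\<integral>\<omega>. indicator ?E \<omega> * (indicator (Z -` B \<inter> space M) \<omega> * h (Z \<omega>)) \<partial>M)"
      using pos by (simp add: divide_cancel_right)
  qed
qed

lemma intB:
  fixes f g :: "'a \<Rightarrow> real"
  assumes "integrable M f" "g \<in> borel_measurable M" "\<And>\<omega>. \<omega> \<in> space M \<Longrightarrow> \<bar>g \<omega>\<bar> \<le> \<bar>f \<omega>\<bar>"
  shows "integrable M g"
proof (rule Bochner_Integration.integrable_bound[OF assms(1,2)])
  show "AE \<omega> in M. norm (g \<omega>) \<le> norm (f \<omega>)" using assms(3) by (intro AE_I2) simp
qed

lemma intE:
  fixes g h :: "'a \<Rightarrow> real"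
  assumes "integrable M g" "\<And>x. x \<in> space M \<Longrightarrow> g x = h x"
  shows "integrable M h"
  using assms Bochner_Integration.integrable_cong[of M M g h] by simp

lemma intI2:
  fixes f :: "'a \<Rightarrow> real"
  assumes F: "F \<in> sets M" and B: "B \<in> sets M" and FE: "F \<subseteq> E"
    and i: "integrable M (\<lambda>x. indicator E x * f x)"
  shows "integrable M (\<lambda>x. indicator F x * (indicator B x * f x))"
proof (rule intE[OF intI[OF sets.Int[OF F B] i]])
  fix x show "indicator (F \<inter> B) x * (indicator E x * f x) = indicator F x * (indicator B x * f x)"
    using FE by (auto split: split_indicator)
qed

lemma int_space:
  fixes f g :: "'a \<Rightarrow> real"
  shows "(\<integral>\<omega>. g \<omega> * (indicator (space M) \<omega> * f \<omega>) \<partial>M) = (\<integral>\<omega>. g \<omega> * f \<omega> \<partial>M)"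
  by (rule Bochner_Integration.integral_cong) auto

lemma absb: "\<bar>w - t\<bar> \<le> (e::real) \<Longrightarrow> \<bar>t\<bar> \<le> \<bar>w\<bar> + e"
  by arith

lemma divb1:
  assumes "x \<le> y + d1 * z + d2 * P" "(P::real) > 0"
  shows "x / P \<le> y / P + d1 * (z / P) + d2"
proof -
  have "x / P \<le> (y + d1 * z + d2 * P) / P" using assms by (intro divide_right_mono) auto
  also have "\<dots> = y / P + d1 * (z / P) + d2" using assms(2) by (simp add: add_divide_distrib)
  finally show ?thesis .
qed

lemma divb2:
  assumes "y - d1 * z - d2 * P \<le> x" "(P::real) > 0"
  shows "y / P - d1 * (z / P) - d2 \<le> x / P"
proof -
  have "y / P - d1 * (z / P) - d2 = (y - d1 * z - d2 * P) / P" using assms(2) by (simp add: diff_divide_distrib)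
  also have "\<dots> \<le> x / P" using assms by (intro divide_right_mono) auto
  finally show ?thesis .
qed

theorem theorem2:
  fixes M :: "'o measure"
    and X :: "'o \<Rightarrow> real ^ 'd" and V :: "'o \<Rightarrow> real ^ 'k" and idx :: "'k \<Rightarrow> 'd"
    and A :: "'o \<Rightarrow> nat" and S :: "'o \<Rightarrow> nat" and Y :: "'o \<Rightarrow> real"
    and Ypot :: "nat \<Rightarrow> 'o \<Rightarrow> real"
    and pi :: "nat \<Rightarrow> real ^ 'd \<Rightarrow> real" and rho :: "real ^ 'k \<Rightarrow> real"
    and mu :: "nat \<Rightarrow> real ^ 'd \<Rightarrow> real" and tau :: "nat \<Rightarrow> real ^ 'k \<Rightarrow> real"
    and q :: "nat \<Rightarrow> real ^ 'k \<Rightarrow> real"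
    and m :: "nat \<Rightarrow> nat \<Rightarrow> real ^ 'd \<Rightarrow> real"
    and n :: "nat \<Rightarrow> nat \<Rightarrow> real ^ 'k \<Rightarrow> real"
    and \<delta>1 \<delta>2 :: real
  assumes M: "prob_space M"
    and X_meas: "X \<in> borel_measurable M"
    and idx: "inj idx"
    and V_def: "\<forall>\<omega>. V \<omega> = (\<chi> j. X \<omega> $ idx j)"
    and A_meas: "A \<in> measurable M (count_space UNIV)" and A_bin: "\<forall>\<omega>\<in>space M. A \<omega> \<in> {0, 1}"
    and S_meas: "S \<in> measurable M (count_space UNIV)" and S_bin: "\<forall>\<omega>\<in>space M. S \<omega> \<in> {0, 1}"
    and Y_meas: "Y \<in> borel_measurable M"
    and Ypot_int: "\<forall>a\<in>{0, 1}. integrable M (Ypot a)"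
    and S0_pos: "measure M {\<omega> \<in> space M. S \<omega> = 0} > 0"
    \<comment> \<open>nuisance functions (versions of the regression functions)\<close>
    and pi_def: "\<forall>a\<in>{0, 1}. is_cond_exp_fn (condM M (\<lambda>\<omega>. S \<omega> = 1))
                    (\<lambda>\<omega>. if A \<omega> = a then 1 else 0) X borel (pi a)"
    and rho_def: "is_cond_exp_fn M (\<lambda>\<omega>. if S \<omega> = 1 then 1 else 0) V borel rho"
    and mu_def: "\<forall>a\<in>{0, 1}. is_cond_exp_fn (condM M (\<lambda>\<omega>. A \<omega> = a \<and> S \<omega> = 1)) Y X borel (mu a)"
    and tau_def: "\<forall>a\<in>{0, 1}. is_cond_exp_fn (condM M (\<lambda>\<omega>. S \<omega> = 1))
                    (\<lambda>\<omega>. mu a (X \<omega>)) V borel (tau a)"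
    and q_def: "\<forall>a\<in>{0, 1}. is_cond_exp_fn (condM M (\<lambda>\<omega>. S \<omega> = 1))
                    (\<lambda>\<omega>. if A \<omega> = a then 1 else 0) V borel (q a)"
    and m_def: "\<forall>a\<in>{0, 1}. \<forall>b\<in>{0, 1}.
                  is_cond_exp_fn (condM M (\<lambda>\<omega>. A \<omega> = b \<and> S \<omega> = 1)) (Ypot a) X borel (m a b)"
    and n_def: "\<forall>a\<in>{0, 1}. \<forall>s\<in>{0, 1}.
                  is_cond_exp_fn (condM M (\<lambda>\<omega>. S \<omega> = s)) (Ypot a) V borel (n a s)"
    \<comment> \<open>(i) consistency\<close>
    and consistency: "\<forall>a\<in>{0, 1}. \<forall>\<omega>\<in>space M. A \<omega> = a \<longrightarrow> Y \<omega> = Ypot a \<omega>"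
    \<comment> \<open>(ii) treatment positivity\<close>
    and treat_pos: "\<forall>a\<in>{0, 1}. AE \<omega> in condM M (\<lambda>\<omega>. S \<omega> = 1). pi a (X \<omega>) > 0"
    \<comment> \<open>(iii) selection positivity\<close>
    and sel_pos: "AE \<omega> in M. rho (V \<omega>) > 0"
    \<comment> \<open>(iv) bounded unmeasured confounding\<close>
    and d1_pos: "\<delta>1 > 0"
    and bound1: "\<forall>a\<in>{0, 1}. AE \<omega> in condM M (\<lambda>\<omega>. S \<omega> = 1). \<bar>m a 1 (X \<omega>) - m a 0 (X \<omega>)\<bar> \<le> \<delta>1"
    \<comment> \<open>(v) bounded violation of transportability\<close>
    and d2_pos: "\<delta>2 > 0"
    and bound2: "\<forall>a\<in>{0, 1}. AE \<omega> in M. \<bar>n a 0 (V \<omega>) - n a 1 (V \<omega>)\<bar> \<le> \<delta>2"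
  shows "(\<forall>a\<in>{0, 1}.
            (\<integral>\<omega>. Ypot a \<omega> \<partial>M) \<in>
              {(\<integral>\<omega>. tau a (V \<omega>) \<partial>M) - \<delta>1 * (\<integral>\<omega>. q (1 - a) (V \<omega>) \<partial>M)
                 - \<delta>2 * measure M {\<omega> \<in> space M. S \<omega> = 0} ..
               (\<integral>\<omega>. tau a (V \<omega>) \<partial>M) + \<delta>1 * (\<integral>\<omega>. q (1 - a) (V \<omega>) \<partial>M)
                 + \<delta>2 * measure M {\<omega> \<in> space M. S \<omega> = 0}} \<and>
            (\<integral>\<omega>. Ypot a \<omega> \<partial>condM M (\<lambda>\<omega>. S \<omega> = 0)) \<in>
              {(\<integral>\<omega>. tau a (V \<omega>) \<partial>condM M (\<lambda>\<omega>. S \<omega> = 0))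
                 - \<delta>1 * (\<integral>\<omega>. q (1 - a) (V \<omega>) \<partial>condM M (\<lambda>\<omega>. S \<omega> = 0)) - \<delta>2 ..
               (\<integral>\<omega>. tau a (V \<omega>) \<partial>condM M (\<lambda>\<omega>. S \<omega> = 0))
                 + \<delta>1 * (\<integral>\<omega>. q (1 - a) (V \<omega>) \<partial>condM M (\<lambda>\<omega>. S \<omega> = 0)) + \<delta>2})
       \<and> (\<integral>\<omega>. Ypot 1 \<omega> \<partial>M) - (\<integral>\<omega>. Ypot 0 \<omega> \<partial>M) \<in>
           {(\<integral>\<omega>. tau 1 (V \<omega>) - tau 0 (V \<omega>) \<partial>M) - \<delta>1 - 2 * \<delta>2 * measure M {\<omega> \<in> space M. S \<omega> = 0} ..
            (\<integral>\<omega>. tau 1 (V \<omega>) - tau 0 (V \<omega>) \<partial>M) + \<delta>1 + 2 * \<delta>2 * measure M {\<omega> \<in> space M. S \<omega> = 0}}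
       \<and> (\<integral>\<omega>. Ypot 1 \<omega> \<partial>condM M (\<lambda>\<omega>. S \<omega> = 0)) - (\<integral>\<omega>. Ypot 0 \<omega> \<partial>condM M (\<lambda>\<omega>. S \<omega> = 0)) \<in>
           {(\<integral>\<omega>. tau 1 (V \<omega>) - tau 0 (V \<omega>) \<partial>condM M (\<lambda>\<omega>. S \<omega> = 0)) - \<delta>1 - 2 * \<delta>2 ..
            (\<integral>\<omega>. tau 1 (V \<omega>) - tau 0 (V \<omega>) \<partial>condM M (\<lambda>\<omega>. S \<omega> = 0)) + \<delta>1 + 2 * \<delta>2}"
proof -
  interpret prob_space M by (rule M)
  note [measurable] = X_meas A_meas S_meas Y_meas
  define proj :: "real^'d \<Rightarrow> real^'k" where "proj = (\<lambda>x. \<chi> j. x $ idx j)"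
  have proj_m[measurable]: "proj \<in> borel_measurable borel"
    unfolding proj_def by (intro borel_measurable_continuous_onI continuous_intros)
  have Vp: "V = (\<lambda>\<omega>. proj (X \<omega>))" using V_def by (auto simp: proj_def)
  have V_m[measurable]: "V \<in> borel_measurable M" unfolding Vp by measurable
  have Vpre: "\<And>B. V -` B \<inter> space M = X -` (proj -` B) \<inter> space M" unfolding Vp by auto
  have projB: "\<And>B. B \<in> sets borel \<Longrightarrow> proj -` B \<in> sets borel"
    using measurable_sets[OF proj_m] by simp
  let ?E1 = "{\<omega>\<in>space M. S \<omega> = 1}"
  let ?E0 = "{\<omega>\<in>space M. S \<omega> = 0}"
  let ?F = "\<lambda>b. {\<omega>\<in>space M. A \<omega> = b \<and> S \<omega> = 1}"
  have predS[measurable]: "\<And>s. Measurable.pred M (\<lambda>\<omega>. S \<omega> = s)" by measurable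
  have predA[measurable]: "\<And>b. Measurable.pred M (\<lambda>\<omega>. A \<omega> = b)" by measurable
  have predF: "\<And>b. Measurable.pred M (\<lambda>\<omega>. A \<omega> = b \<and> S \<omega> = 1)"
    using predA predS by (rule pred_intros_logic)
  have E1s: "?E1 \<in> sets M" using predS by simp
  have E0s: "?E0 \<in> sets M" using predS by simp
  have Fs: "\<And>b. ?F b \<in> sets M" using predF by simp
  have rho_i: "integrable M (\<lambda>\<omega>. rho (V \<omega>))" and rho_m: "rho \<in> borel_measurable borel"
    and rho_eq: "\<forall>B\<in>sets borel. (\<integral>\<omega>. indicator (V -` B \<inter> space M) \<omega> * (if S \<omega> = 1 then 1 else 0) \<partial>M)
               = (\<integral>\<omega>. indicator (V -` B \<inter> space M) \<omega> * rho (V \<omega>) \<partial>M)"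
    using rho_def unfolding is_cond_exp_fn_def by blast+
  have sel_tr: "AE \<omega> in M. Q (V \<omega>)"
    if Qm: "{x\<in>space borel. \<not> Q x} \<in> sets borel" and hyp: "AE \<omega> in M. S \<omega> = 1 \<longrightarrow> Q (V \<omega>)" for Q
    using ae_transfer[OF M V_m rho_m _ rho_i rho_eq sel_pos Qm hyp] E1s by simp
  have p1: "measure M ?E1 > 0"
  proof (rule ccontr)
    assume "\<not> ?thesis"
    then have "prob ?E1 = 0" using measure_nonneg[of M ?E1] by linarith
    then have "AE \<omega> in M. \<omega> \<notin> ?E1" using prob_eq_0 E1s by simp
    then have "AE \<omega> in M. S \<omega> = 1 \<longrightarrow> False"
      by (rule AE_mp) (rule AE_I2, auto)
    then have "AE \<omega> in M. (\<lambda>_. False) (V \<omega>)"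
      by (intro sel_tr) auto
    then show False using AE_False by simp
  qed
  have p0: "measure M ?E0 > 0" using S0_pos by simp
  interpret N1: prob_space "condM M (\<lambda>\<omega>. S \<omega> = 1)"
    using condM_prob[OF M predS p1] .
  have AE1: "\<And>R. (AE \<omega> in condM M (\<lambda>\<omega>. S \<omega> = 1). R \<omega>) \<longleftrightarrow> (AE \<omega> in M. S \<omega> = 1 \<longrightarrow> R \<omega>)"
    using condM_AE[OF M predS p1] .
  have N1p: "prob_space (condM M (\<lambda>\<omega>. S \<omega> = 1))" using condM_prob[OF M predS p1] .
  have trt_tr: "AE \<omega> in M. S \<omega> = 1 \<longrightarrow> Q (X \<omega>)"
    if c: "c \<in> {0,1}" and Qm: "{x\<in>space borel. \<not> Q x} \<in> sets borel"
      and hyp: "AE \<omega> in M. \<omega> \<in> ?F c \<longrightarrow> Q (X \<omega>)" for c Q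
  proof -
    have pc: "is_cond_exp_fn (condM M (\<lambda>\<omega>. S \<omega> = 1)) (\<lambda>\<omega>. if A \<omega> = c then 1 else 0) X borel (pi c)"
      using pi_def c by blast
    have Xm1: "X \<in> measurable (condM M (\<lambda>\<omega>. S \<omega> = 1)) borel"
      and pim: "pi c \<in> borel_measurable borel"
      and pii: "integrable (condM M (\<lambda>\<omega>. S \<omega> = 1)) (\<lambda>\<omega>. pi c (X \<omega>))"
      and pieq: "\<forall>B\<in>sets borel. (\<integral>\<omega>. indicator (X -` B \<inter> space (condM M (\<lambda>\<omega>. S \<omega> = 1))) \<omega> * (if A \<omega> = c then 1 else 0) \<partial>condM M (\<lambda>\<omega>. S \<omega> = 1))
        = (\<integral>\<omega>. indicator (X -` B \<inter> space (condM M (\<lambda>\<omega>. S \<omega> = 1))) \<omega> * pi c (X \<omega>) \<partial>condM M (\<lambda>\<omega>. S \<omega> = 1))"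
      using pc unfolding is_cond_exp_fn_def by blast+
    have Cs: "{\<omega>\<in>space (condM M (\<lambda>\<omega>. S \<omega> = 1)). A \<omega> = c} \<in> sets (condM M (\<lambda>\<omega>. S \<omega> = 1))"
      using predA by simp
    have pos: "AE \<omega> in condM M (\<lambda>\<omega>. S \<omega> = 1). pi c (X \<omega>) > 0" using treat_pos c by blast
    have hyp1: "AE \<omega> in condM M (\<lambda>\<omega>. S \<omega> = 1). A \<omega> = c \<longrightarrow> Q (X \<omega>)"
      unfolding AE1 using hyp AE_space by eventually_elim auto
    have "AE \<omega> in condM M (\<lambda>\<omega>. S \<omega> = 1). Q (X \<omega>)"
      using ae_transfer[OF N1p Xm1 pim Cs pii pieq pos Qm hyp1] .
    then show ?thesis unfolding AE1 .
  qed
  have pF: "measure M (?F c) > 0" if c: "c \<in> {0,1}" for c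
  proof (rule ccontr)
    assume "\<not> ?thesis"
    then have "prob (?F c) = 0" using measure_nonneg[of M "?F c"] by linarith
    then have "AE \<omega> in M. \<omega> \<notin> ?F c" using prob_eq_0 Fs by simp
    then have "AE \<omega> in M. \<omega> \<in> ?F c \<longrightarrow> (\<lambda>_. False) (X \<omega>)"
      by (rule AE_mp) (rule AE_I2, auto)
    then have "AE \<omega> in M. S \<omega> = 1 \<longrightarrow> (\<lambda>_. False) (X \<omega>)"
      by (intro trt_tr[OF c]) auto
    then have "AE \<omega> in M. \<omega> \<notin> ?E1" by (rule AE_mp) (rule AE_I2, auto)
    then have "prob ?E1 = 0" using prob_eq_0 E1s by simp
    with p1 show False by simp
  qed
  have core: "AE \<omega> in M. \<bar>n a 1 (V \<omega>) - tau a (V \<omega>)\<bar> \<le> \<delta>1 * q (1 - a) (V \<omega>)"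
    if a: "a \<in> {0,1}" for a
  proof -
    define b where "b = 1 - a"
    have b: "b \<in> {0,1}" "b \<noteq> a" using a by (auto simp: b_def)
    have Ab: "\<And>\<omega>. \<omega> \<in> space M \<Longrightarrow> A \<omega> = a \<or> A \<omega> = b" using A_bin a by (auto simp: b_def)
    have c_maa: "is_cond_exp_fn (condM M (\<lambda>\<omega>. A \<omega> = a \<and> S \<omega> = 1)) (Ypot a) X borel (m a a)"
      using m_def a by blast
    note maa = cefM[OF M predF pF[OF a] c_maa]
    have c_mab: "is_cond_exp_fn (condM M (\<lambda>\<omega>. A \<omega> = b \<and> S \<omega> = 1)) (Ypot a) X borel (m a b)"
      using m_def a b by blast
    note mab = cefM[OF M predF pF[OF b(1)] c_mab]
    have c_mu: "is_cond_exp_fn (condM M (\<lambda>\<omega>. A \<omega> = a \<and> S \<omega> = 1)) Y X borel (mu a)"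
      using mu_def a by blast
    note mua = cefM[OF M predF pF[OF a] c_mu]
    have c_tau: "is_cond_exp_fn (condM M (\<lambda>\<omega>. S \<omega> = 1)) (\<lambda>\<omega>. mu a (X \<omega>)) V borel (tau a)"
      using tau_def a by blast
    note taua = cefM[OF M predS p1 c_tau]
    have c_q: "is_cond_exp_fn (condM M (\<lambda>\<omega>. S \<omega> = 1)) (\<lambda>\<omega>. if A \<omega> = b then 1 else 0) V borel (q b)"
      using q_def b by blast
    note qb = cefM[OF M predS p1 c_q]
    have c_n: "is_cond_exp_fn (condM M (\<lambda>\<omega>. S \<omega> = 1)) (Ypot a) V borel (n a 1)"
      using n_def a by blast
    note na1 = cefM[OF M predS p1 c_n]
    note [measurable] = maa(3) mab(3) mua(3) taua(3) qb(3) na1(3) maa(4)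
    have eq1: "\<forall>B\<in>sets borel. (\<integral>\<omega>. indicator (?F a) \<omega> * (indicator (X -` B \<inter> space M) \<omega> * m a a (X \<omega>)) \<partial>M)
        = (\<integral>\<omega>. indicator (?F a) \<omega> * (indicator (X -` B \<inter> space M) \<omega> * mu a (X \<omega>)) \<partial>M)"
    proof
      fix B :: "(real^'d) set" assume B: "B \<in> sets borel"
      have "(\<integral>\<omega>. indicator (?F a) \<omega> * (indicator (X -` B \<inter> space M) \<omega> * Ypot a \<omega>) \<partial>M)
          = (\<integral>\<omega>. indicator (?F a) \<omega> * (indicator (X -` B \<inter> space M) \<omega> * Y \<omega>) \<partial>M)"
        using consistency a by (intro Bochner_Integration.integral_cong) (auto split: split_indicator)
      then show "(\<integral>\<omega>. indicator (?F a) \<omega> * (indicator (X -` B \<inter> space M) \<omega> * m a a (X \<omega>)) \<partial>M)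
        = (\<integral>\<omega>. indicator (?F a) \<omega> * (indicator (X -` B \<inter> space M) \<omega> * mu a (X \<omega>)) \<partial>M)"
        using maa(6) mua(6) B by simp
    qed
    have s1a: "AE \<omega> in M. \<omega> \<in> ?F a \<longrightarrow> m a a (X \<omega>) \<le> mu a (X \<omega>)"
      by (rule ae_le_from_sets[OF maa(2) maa(3) mua(3) Fs maa(5) mua(5)]) (use eq1 in simp)
    have s1b: "AE \<omega> in M. \<omega> \<in> ?F a \<longrightarrow> mu a (X \<omega>) \<le> m a a (X \<omega>)"
      by (rule ae_le_from_sets[OF maa(2) mua(3) maa(3) Fs mua(5) maa(5)]) (use eq1 in simp)
    have s1: "AE \<omega> in M. \<omega> \<in> ?F a \<longrightarrow> m a a (X \<omega>) = mu a (X \<omega>)"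
      using s1a s1b by eventually_elim auto
    have Qeq: "{x\<in>space borel. \<not> m a a x = mu a x} \<in> sets borel" by measurable
    have s2: "AE \<omega> in M. S \<omega> = 1 \<longrightarrow> m a a (X \<omega>) = mu a (X \<omega>)"
      by (rule trt_tr[OF a Qeq s1])
    have bnd: "AE \<omega> in M. S \<omega> = 1 \<longrightarrow> \<bar>m a b (X \<omega>) - m a a (X \<omega>)\<bar> \<le> \<delta>1"
    proof -
      have "AE \<omega> in condM M (\<lambda>\<omega>. S \<omega> = 1). \<bar>m a 1 (X \<omega>) - m a 0 (X \<omega>)\<bar> \<le> \<delta>1"
        using bound1 a by blast
      then have "AE \<omega> in M. S \<omega> = 1 \<longrightarrow> \<bar>m a 1 (X \<omega>) - m a 0 (X \<omega>)\<bar> \<le> \<delta>1"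
        unfolding AE1 .
      moreover have "(a = 0 \<and> b = 1) \<or> (a = 1 \<and> b = 0)" using a by (auto simp: b_def)
      ultimately show ?thesis by (auto simp: abs_minus_commute)
    qed
    have intc: "integrable M (\<lambda>\<omega>. c)" for c :: real by simp
    have Yi: "integrable M (Ypot a)" using Ypot_int a by blast
    have Yi': "integrable M (\<lambda>\<omega>. indicator (space M) \<omega> * Ypot a \<omega>)"
      by (rule intE[OF Yi]) simp
    have FE: "\<And>c. ?F c \<subseteq> ?E1" by auto
    have KEY: "(\<integral>\<omega>. indicator ?E1 \<omega> * (indicator (V -` B \<inter> space M) \<omega> * n a 1 (V \<omega>)) \<partial>M)
        = (\<integral>\<omega>. indicator ?E1 \<omega> * (indicator (V -` B \<inter> space M) \<omega> * tau a (V \<omega>)) \<partial>M)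
          + (\<integral>\<omega>. indicator (?F b) \<omega> * (indicator (V -` B \<inter> space M) \<omega> * (m a b (X \<omega>) - m a a (X \<omega>))) \<partial>M)"
      and INTD: "integrable M (\<lambda>\<omega>. indicator (?F b) \<omega> * (indicator (V -` B \<inter> space M) \<omega> * (m a b (X \<omega>) - m a a (X \<omega>))))"
      if B: "B \<in> sets borel" for B
    proof -
      have VB: "V -` B \<inter> space M \<in> sets M" using V_m B by (rule measurable_sets)
      have pB: "proj -` B \<in> sets borel" using projB B .
      have Fa: "?F a \<in> sets M" and Fb: "?F b \<in> sets M" using Fs by blast+
      note [measurable] = VB Fa Fb E1s
      have iYa: "integrable M (\<lambda>\<omega>. indicator (?F a) \<omega> * (indicator (V -` B \<inter> space M) \<omega> * Ypot a \<omega>))"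
        by (rule intI2[OF Fa VB _ Yi']) auto
      have iYb: "integrable M (\<lambda>\<omega>. indicator (?F b) \<omega> * (indicator (V -` B \<inter> space M) \<omega> * Ypot a \<omega>))"
        by (rule intI2[OF Fb VB _ Yi']) auto
      have imua: "integrable M (\<lambda>\<omega>. indicator (?F a) \<omega> * (indicator (V -` B \<inter> space M) \<omega> * mu a (X \<omega>)))"
        by (rule intI2[OF Fa VB FE taua(1)])
      have imub: "integrable M (\<lambda>\<omega>. indicator (?F b) \<omega> * (indicator (V -` B \<inter> space M) \<omega> * mu a (X \<omega>)))"
        by (rule intI2[OF Fb VB FE taua(1)])
      have imaa: "integrable M (\<lambda>\<omega>. indicator (?F a) \<omega> * (indicator (V -` B \<inter> space M) \<omega> * m a a (X \<omega>)))"
        by (rule intI2[OF Fa VB _ maa(5)]) auto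
      have imab: "integrable M (\<lambda>\<omega>. indicator (?F b) \<omega> * (indicator (V -` B \<inter> space M) \<omega> * m a b (X \<omega>)))"
        by (rule intI2[OF Fb VB _ mab(5)]) auto
      show iD: "integrable M (\<lambda>\<omega>. indicator (?F b) \<omega> * (indicator (V -` B \<inter> space M) \<omega> * (m a b (X \<omega>) - m a a (X \<omega>))))"
      proof (rule Bochner_Integration.integrable_bound[OF intc[of \<delta>1]])
        show "(\<lambda>\<omega>. indicator (?F b) \<omega> * (indicator (V -` B \<inter> space M) \<omega> * (m a b (X \<omega>) - m a a (X \<omega>)))) \<in> borel_measurable M"
          by measurable
        show "AE \<omega> in M. norm (indicator (?F b) \<omega> * (indicator (V -` B \<inter> space M) \<omega> * (m a b (X \<omega>) - m a a (X \<omega>)))) \<le> norm \<delta>1"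
          using bnd by eventually_elim (use d1_pos in \<open>auto split: split_indicator\<close>)
      qed
      have L1: "(\<integral>\<omega>. indicator ?E1 \<omega> * (indicator (V -` B \<inter> space M) \<omega> * n a 1 (V \<omega>)) \<partial>M)
          = (\<integral>\<omega>. indicator ?E1 \<omega> * (indicator (V -` B \<inter> space M) \<omega> * Ypot a \<omega>) \<partial>M)"
        using bspec[OF na1(6) B] by simp
      have L2a: "(\<integral>\<omega>. indicator ?E1 \<omega> * (indicator (V -` B \<inter> space M) \<omega> * Ypot a \<omega>) \<partial>M)
          = (\<integral>\<omega>. indicator (?F a) \<omega> * (indicator (V -` B \<inter> space M) \<omega> * Ypot a \<omega>)
              + indicator (?F b) \<omega> * (indicator (V -` B \<inter> space M) \<omega> * Ypot a \<omega>) \<partial>M)"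
        (is "integral\<^sup>L M ?l = integral\<^sup>L M ?r")
      proof (rule Bochner_Integration.integral_cong[OF refl])
        fix \<omega> assume "\<omega> \<in> space M"
        then have "A \<omega> = a \<or> A \<omega> = b" by (rule Ab)
        then show "?l \<omega> = ?r \<omega>" using b by (auto split: split_indicator)
      qed
      have L2: "(\<integral>\<omega>. indicator ?E1 \<omega> * (indicator (V -` B \<inter> space M) \<omega> * Ypot a \<omega>) \<partial>M)
          = (\<integral>\<omega>. indicator (?F a) \<omega> * (indicator (V -` B \<inter> space M) \<omega> * Ypot a \<omega>) \<partial>M)
            + (\<integral>\<omega>. indicator (?F b) \<omega> * (indicator (V -` B \<inter> space M) \<omega> * Ypot a \<omega>) \<partial>M)"
        unfolding L2a using iYa iYb by (rule Bochner_Integration.integral_add)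
      have L3: "(\<integral>\<omega>. indicator (?F a) \<omega> * (indicator (V -` B \<inter> space M) \<omega> * Ypot a \<omega>) \<partial>M)
          = (\<integral>\<omega>. indicator (?F a) \<omega> * (indicator (V -` B \<inter> space M) \<omega> * m a a (X \<omega>)) \<partial>M)"
        using bspec[OF maa(6) pB] unfolding Vpre .
      have L5: "(\<integral>\<omega>. indicator (?F b) \<omega> * (indicator (V -` B \<inter> space M) \<omega> * Ypot a \<omega>) \<partial>M)
          = (\<integral>\<omega>. indicator (?F b) \<omega> * (indicator (V -` B \<inter> space M) \<omega> * m a b (X \<omega>)) \<partial>M)"
        using bspec[OF mab(6) pB] unfolding Vpre .
      have L4: "(\<integral>\<omega>. indicator (?F a) \<omega> * (indicator (V -` B \<inter> space M) \<omega> * m a a (X \<omega>)) \<partial>M)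
          = (\<integral>\<omega>. indicator (?F a) \<omega> * (indicator (V -` B \<inter> space M) \<omega> * mu a (X \<omega>)) \<partial>M)"
      proof (rule integral_cong_AE)
        show "AE \<omega> in M. indicator (?F a) \<omega> * (indicator (V -` B \<inter> space M) \<omega> * m a a (X \<omega>))
            = indicator (?F a) \<omega> * (indicator (V -` B \<inter> space M) \<omega> * mu a (X \<omega>))"
          using s1 by eventually_elim (auto split: split_indicator)
      qed measurable
      have L6a: "(\<integral>\<omega>. indicator (?F b) \<omega> * (indicator (V -` B \<inter> space M) \<omega> * m a b (X \<omega>)) \<partial>M)
          = (\<integral>\<omega>. indicator (?F b) \<omega> * (indicator (V -` B \<inter> space M) \<omega> * mu a (X \<omega>))
             + indicator (?F b) \<omega> * (indicator (V -` B \<inter> space M) \<omega> * (m a b (X \<omega>) - m a a (X \<omega>))) \<partial>M)"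
      proof (rule integral_cong_AE)
        show "AE \<omega> in M. indicator (?F b) \<omega> * (indicator (V -` B \<inter> space M) \<omega> * m a b (X \<omega>))
            = indicator (?F b) \<omega> * (indicator (V -` B \<inter> space M) \<omega> * mu a (X \<omega>))
             + indicator (?F b) \<omega> * (indicator (V -` B \<inter> space M) \<omega> * (m a b (X \<omega>) - m a a (X \<omega>)))"
          using s2 by eventually_elim (auto split: split_indicator)
      qed measurable
      have L6: "(\<integral>\<omega>. indicator (?F b) \<omega> * (indicator (V -` B \<inter> space M) \<omega> * m a b (X \<omega>)) \<partial>M)
          = (\<integral>\<omega>. indicator (?F b) \<omega> * (indicator (V -` B \<inter> space M) \<omega> * mu a (X \<omega>)) \<partial>M)
            + (\<integral>\<omega>. indicator (?F b) \<omega> * (indicator (V -` B \<inter> space M) \<omega> * (m a b (X \<omega>) - m a a (X \<omega>))) \<partial>M)"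
        unfolding L6a using imub iD by (rule Bochner_Integration.integral_add)
      have L7a: "(\<integral>\<omega>. indicator ?E1 \<omega> * (indicator (V -` B \<inter> space M) \<omega> * mu a (X \<omega>)) \<partial>M)
          = (\<integral>\<omega>. indicator (?F a) \<omega> * (indicator (V -` B \<inter> space M) \<omega> * mu a (X \<omega>))
              + indicator (?F b) \<omega> * (indicator (V -` B \<inter> space M) \<omega> * mu a (X \<omega>)) \<partial>M)"
        (is "integral\<^sup>L M ?l = integral\<^sup>L M ?r")
      proof (rule Bochner_Integration.integral_cong[OF refl])
        fix \<omega> assume "\<omega> \<in> space M"
        then have "A \<omega> = a \<or> A \<omega> = b" by (rule Ab)
        then show "?l \<omega> = ?r \<omega>" using b by (auto split: split_indicator)
      qed
      have L7: "(\<integral>\<omega>. indicator ?E1 \<omega> * (indicator (V -` B \<inter> space M) \<omega> * mu a (X \<omega>)) \<partial>M)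
          = (\<integral>\<omega>. indicator (?F a) \<omega> * (indicator (V -` B \<inter> space M) \<omega> * mu a (X \<omega>)) \<partial>M)
            + (\<integral>\<omega>. indicator (?F b) \<omega> * (indicator (V -` B \<inter> space M) \<omega> * mu a (X \<omega>)) \<partial>M)"
        unfolding L7a using imua imub by (rule Bochner_Integration.integral_add)
      have L8: "(\<integral>\<omega>. indicator ?E1 \<omega> * (indicator (V -` B \<inter> space M) \<omega> * mu a (X \<omega>)) \<partial>M)
          = (\<integral>\<omega>. indicator ?E1 \<omega> * (indicator (V -` B \<inter> space M) \<omega> * tau a (V \<omega>)) \<partial>M)"
        using bspec[OF taua(6) B] .
      show "(\<integral>\<omega>. indicator ?E1 \<omega> * (indicator (V -` B \<inter> space M) \<omega> * n a 1 (V \<omega>)) \<partial>M)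
        = (\<integral>\<omega>. indicator ?E1 \<omega> * (indicator (V -` B \<inter> space M) \<omega> * tau a (V \<omega>)) \<partial>M)
          + (\<integral>\<omega>. indicator (?F b) \<omega> * (indicator (V -` B \<inter> space M) \<omega> * (m a b (X \<omega>) - m a a (X \<omega>))) \<partial>M)"
        using L1 L2 L3 L4 L5 L6 L7 L8 by linarith
    qed
    have Fb: "?F b \<in> sets M" using Fs by blast
    have QB: "(\<integral>\<omega>. indicator (?F b) \<omega> * (indicator (V -` B \<inter> space M) \<omega> * \<delta>1) \<partial>M)
        = (\<integral>\<omega>. indicator ?E1 \<omega> * (indicator (V -` B \<inter> space M) \<omega> * (\<delta>1 * q b (V \<omega>))) \<partial>M)"
      if B: "B \<in> sets borel" for B
    proof -
      have "(\<integral>\<omega>. indicator (?F b) \<omega> * (indicator (V -` B \<inter> space M) \<omega> * \<delta>1) \<partial>M)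
          = (\<integral>\<omega>. \<delta>1 * (indicator ?E1 \<omega> * (indicator (V -` B \<inter> space M) \<omega> * (if A \<omega> = b then 1 else 0))) \<partial>M)"
        by (rule Bochner_Integration.integral_cong[OF refl]) (auto split: split_indicator)
      also have "\<dots> = \<delta>1 * (\<integral>\<omega>. indicator ?E1 \<omega> * (indicator (V -` B \<inter> space M) \<omega> * (if A \<omega> = b then 1 else 0)) \<partial>M)"
        by (rule integral_mult_right_zero)
      also have "\<dots> = \<delta>1 * (\<integral>\<omega>. indicator ?E1 \<omega> * (indicator (V -` B \<inter> space M) \<omega> * q b (V \<omega>)) \<partial>M)"
        using bspec[OF qb(6) B] by simp
      also have "\<dots> = (\<integral>\<omega>. \<delta>1 * (indicator ?E1 \<omega> * (indicator (V -` B \<inter> space M) \<omega> * q b (V \<omega>))) \<partial>M)"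
        by (rule integral_mult_right_zero[symmetric])
      also have "\<dots> = (\<integral>\<omega>. indicator ?E1 \<omega> * (indicator (V -` B \<inter> space M) \<omega> * (\<delta>1 * q b (V \<omega>))) \<partial>M)"
        by (rule Bochner_Integration.integral_cong[OF refl]) simp
      finally show ?thesis .
    qed
    have RB: "\<bar>\<integral>\<omega>. indicator (?F b) \<omega> * (indicator (V -` B \<inter> space M) \<omega> * (m a b (X \<omega>) - m a a (X \<omega>))) \<partial>M\<bar>
        \<le> (\<integral>\<omega>. indicator (?F b) \<omega> * (indicator (V -` B \<inter> space M) \<omega> * \<delta>1) \<partial>M)"
      if B: "B \<in> sets borel" for B
    proof -
      have VB: "V -` B \<inter> space M \<in> sets M" using V_m B by (rule measurable_sets)
      have i2: "integrable M (\<lambda>\<omega>. indicator (?F b) \<omega> * (indicator (V -` B \<inter> space M) \<omega> * \<delta>1))"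
        by (rule intE[OF intI[OF sets.Int[OF Fb VB] intc[of \<delta>1]]]) (auto split: split_indicator)
      have "\<bar>\<integral>\<omega>. indicator (?F b) \<omega> * (indicator (V -` B \<inter> space M) \<omega> * (m a b (X \<omega>) - m a a (X \<omega>))) \<partial>M\<bar>
          \<le> (\<integral>\<omega>. \<bar>indicator (?F b) \<omega> * (indicator (V -` B \<inter> space M) \<omega> * (m a b (X \<omega>) - m a a (X \<omega>)))\<bar> \<partial>M)"
        by (rule integral_abs_bound)
      also have "\<dots> \<le> (\<integral>\<omega>. indicator (?F b) \<omega> * (indicator (V -` B \<inter> space M) \<omega> * \<delta>1) \<partial>M)"
      proof (rule integral_mono_AE)
        show "integrable M (\<lambda>\<omega>. \<bar>indicator (?F b) \<omega> * (indicator (V -` B \<inter> space M) \<omega> * (m a b (X \<omega>) - m a a (X \<omega>)))\<bar>)"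
          using INTD[OF B] by (rule integrable_abs)
        show "integrable M (\<lambda>\<omega>. indicator (?F b) \<omega> * (indicator (V -` B \<inter> space M) \<omega> * \<delta>1))" by (rule i2)
        show "AE \<omega> in M. \<bar>indicator (?F b) \<omega> * (indicator (V -` B \<inter> space M) \<omega> * (m a b (X \<omega>) - m a a (X \<omega>)))\<bar>
            \<le> indicator (?F b) \<omega> * (indicator (V -` B \<inter> space M) \<omega> * \<delta>1)"
          using bnd by eventually_elim (auto split: split_indicator)
      qed
      finally show ?thesis .
    qed
    have DIFF: "(\<integral>\<omega>. indicator ?E1 \<omega> * (indicator (V -` B \<inter> space M) \<omega> * (n a 1 (V \<omega>) - tau a (V \<omega>))) \<partial>M)
        = (\<integral>\<omega>. indicator ?E1 \<omega> * (indicator (V -` B \<inter> space M) \<omega> * n a 1 (V \<omega>)) \<partial>M)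
          - (\<integral>\<omega>. indicator ?E1 \<omega> * (indicator (V -` B \<inter> space M) \<omega> * tau a (V \<omega>)) \<partial>M)"
      and DIFF2: "(\<integral>\<omega>. indicator ?E1 \<omega> * (indicator (V -` B \<inter> space M) \<omega> * (tau a (V \<omega>) - n a 1 (V \<omega>))) \<partial>M)
        = (\<integral>\<omega>. indicator ?E1 \<omega> * (indicator (V -` B \<inter> space M) \<omega> * tau a (V \<omega>)) \<partial>M)
          - (\<integral>\<omega>. indicator ?E1 \<omega> * (indicator (V -` B \<inter> space M) \<omega> * n a 1 (V \<omega>)) \<partial>M)"
      if B: "B \<in> sets borel" for B
    proof -
      have VB: "V -` B \<inter> space M \<in> sets M" using V_m B by (rule measurable_sets)
      have i1: "integrable M (\<lambda>\<omega>. indicator ?E1 \<omega> * (indicator (V -` B \<inter> space M) \<omega> * n a 1 (V \<omega>)))"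
        by (rule intI2[OF E1s VB subset_refl na1(5)])
      have i2: "integrable M (\<lambda>\<omega>. indicator ?E1 \<omega> * (indicator (V -` B \<inter> space M) \<omega> * tau a (V \<omega>)))"
        by (rule intI2[OF E1s VB subset_refl taua(5)])
      have "(\<integral>\<omega>. indicator ?E1 \<omega> * (indicator (V -` B \<inter> space M) \<omega> * (n a 1 (V \<omega>) - tau a (V \<omega>))) \<partial>M)
        = (\<integral>\<omega>. indicator ?E1 \<omega> * (indicator (V -` B \<inter> space M) \<omega> * n a 1 (V \<omega>))
            - indicator ?E1 \<omega> * (indicator (V -` B \<inter> space M) \<omega> * tau a (V \<omega>)) \<partial>M)"
        by (rule Bochner_Integration.integral_cong[OF refl]) (simp add: algebra_simps)
      then show "(\<integral>\<omega>. indicator ?E1 \<omega> * (indicator (V -` B \<inter> space M) \<omega> * (n a 1 (V \<omega>) - tau a (V \<omega>))) \<partial>M)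
        = (\<integral>\<omega>. indicator ?E1 \<omega> * (indicator (V -` B \<inter> space M) \<omega> * n a 1 (V \<omega>)) \<partial>M)
          - (\<integral>\<omega>. indicator ?E1 \<omega> * (indicator (V -` B \<inter> space M) \<omega> * tau a (V \<omega>)) \<partial>M)"
        using Bochner_Integration.integral_diff[OF i1 i2] by simp
      have "(\<integral>\<omega>. indicator ?E1 \<omega> * (indicator (V -` B \<inter> space M) \<omega> * (tau a (V \<omega>) - n a 1 (V \<omega>))) \<partial>M)
        = (\<integral>\<omega>. indicator ?E1 \<omega> * (indicator (V -` B \<inter> space M) \<omega> * tau a (V \<omega>))
            - indicator ?E1 \<omega> * (indicator (V -` B \<inter> space M) \<omega> * n a 1 (V \<omega>)) \<partial>M)"
        by (rule Bochner_Integration.integral_cong[OF refl]) (simp add: algebra_simps)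
      then show "(\<integral>\<omega>. indicator ?E1 \<omega> * (indicator (V -` B \<inter> space M) \<omega> * (tau a (V \<omega>) - n a 1 (V \<omega>))) \<partial>M)
        = (\<integral>\<omega>. indicator ?E1 \<omega> * (indicator (V -` B \<inter> space M) \<omega> * tau a (V \<omega>)) \<partial>M)
          - (\<integral>\<omega>. indicator ?E1 \<omega> * (indicator (V -` B \<inter> space M) \<omega> * n a 1 (V \<omega>)) \<partial>M)"
        using Bochner_Integration.integral_diff[OF i2 i1] by simp
    qed
    have ig1: "integrable M (\<lambda>\<omega>. indicator ?E1 \<omega> * (n a 1 (V \<omega>) - tau a (V \<omega>)))"
      by (rule intE[OF Bochner_Integration.integrable_diff[OF na1(5) taua(5)]]) (simp add: algebra_simps)
    have ig2: "integrable M (\<lambda>\<omega>. indicator ?E1 \<omega> * (tau a (V \<omega>) - n a 1 (V \<omega>)))"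
      by (rule intE[OF Bochner_Integration.integrable_diff[OF taua(5) na1(5)]]) (simp add: algebra_simps)
    have ik: "integrable M (\<lambda>\<omega>. indicator ?E1 \<omega> * (\<delta>1 * q b (V \<omega>)))"
      by (rule intE[OF integrable_mult_right[OF qb(5), of \<delta>1]]) simp
    have gm1: "(\<lambda>v. n a 1 v - tau a v) \<in> borel_measurable borel" by measurable
    have gm2: "(\<lambda>v. tau a v - n a 1 v) \<in> borel_measurable borel" by measurable
    have km: "(\<lambda>v. \<delta>1 * q b v) \<in> borel_measurable borel" by measurable
    have G1a: "AE \<omega> in M. \<omega> \<in> ?E1 \<longrightarrow> n a 1 (V \<omega>) - tau a (V \<omega>) \<le> \<delta>1 * q b (V \<omega>)"
    proof (rule ae_le_from_sets[OF V_m gm1 km E1s ig1 ik])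
      show "\<forall>B\<in>sets borel. (\<integral>\<omega>. indicator ?E1 \<omega> * (indicator (V -` B \<inter> space M) \<omega> * (n a 1 (V \<omega>) - tau a (V \<omega>))) \<partial>M)
         \<le> (\<integral>\<omega>. indicator ?E1 \<omega> * (indicator (V -` B \<inter> space M) \<omega> * (\<delta>1 * q b (V \<omega>))) \<partial>M)"
      proof
        fix B :: "(real^'k) set" assume B: "B \<in> sets borel"
        show "(\<integral>\<omega>. indicator ?E1 \<omega> * (indicator (V -` B \<inter> space M) \<omega> * (n a 1 (V \<omega>) - tau a (V \<omega>))) \<partial>M)
         \<le> (\<integral>\<omega>. indicator ?E1 \<omega> * (indicator (V -` B \<inter> space M) \<omega> * (\<delta>1 * q b (V \<omega>))) \<partial>M)"
          using DIFF[OF B] KEY[OF B] QB[OF B] RB[OF B] by linarith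
      qed
    qed
    have G1b: "AE \<omega> in M. \<omega> \<in> ?E1 \<longrightarrow> tau a (V \<omega>) - n a 1 (V \<omega>) \<le> \<delta>1 * q b (V \<omega>)"
    proof (rule ae_le_from_sets[OF V_m gm2 km E1s ig2 ik])
      show "\<forall>B\<in>sets borel. (\<integral>\<omega>. indicator ?E1 \<omega> * (indicator (V -` B \<inter> space M) \<omega> * (tau a (V \<omega>) - n a 1 (V \<omega>))) \<partial>M)
         \<le> (\<integral>\<omega>. indicator ?E1 \<omega> * (indicator (V -` B \<inter> space M) \<omega> * (\<delta>1 * q b (V \<omega>))) \<partial>M)"
      proof
        fix B :: "(real^'k) set" assume B: "B \<in> sets borel"
        show "(\<integral>\<omega>. indicator ?E1 \<omega> * (indicator (V -` B \<inter> space M) \<omega> * (tau a (V \<omega>) - n a 1 (V \<omega>))) \<partial>M)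
         \<le> (\<integral>\<omega>. indicator ?E1 \<omega> * (indicator (V -` B \<inter> space M) \<omega> * (\<delta>1 * q b (V \<omega>))) \<partial>M)"
          using DIFF2[OF B] KEY[OF B] QB[OF B] RB[OF B] by linarith
      qed
    qed
    have Qm: "{x\<in>space borel. \<not> \<bar>n a 1 x - tau a x\<bar> \<le> \<delta>1 * q b x} \<in> sets borel" by measurable
    have "AE \<omega> in M. \<bar>n a 1 (V \<omega>) - tau a (V \<omega>)\<bar> \<le> \<delta>1 * q b (V \<omega>)"
    proof (rule sel_tr[OF Qm])
      show "AE \<omega> in M. S \<omega> = 1 \<longrightarrow> \<bar>n a 1 (V \<omega>) - tau a (V \<omega>)\<bar> \<le> \<delta>1 * q b (V \<omega>)"
        using G1a G1b AE_space by eventually_elim auto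
    qed
    then show ?thesis by (simp add: b_def)
  qed
  have intc: "integrable M (\<lambda>\<omega>. c)" for c :: real by simp
  have S01: "\<And>\<omega>. \<omega> \<in> space M \<Longrightarrow> S \<omega> = 0 \<or> S \<omega> = 1" using S_bin by auto
  have qfacts: "(\<forall>B\<in>sets borel. (\<integral>\<omega>. indicator ?E1 \<omega> * (indicator (V -` B \<inter> space M) \<omega> * (if A \<omega> = c then 1 else 0)) \<partial>M)
        = (\<integral>\<omega>. indicator ?E1 \<omega> * (indicator (V -` B \<inter> space M) \<omega> * q c (V \<omega>)) \<partial>M))
      \<and> integrable M (\<lambda>\<omega>. indicator ?E1 \<omega> * q c (V \<omega>)) \<and> q c \<in> borel_measurable borel"
    if c: "c \<in> {0,1}" for c
  proof -
    have c_q: "is_cond_exp_fn (condM M (\<lambda>\<omega>. S \<omega> = 1)) (\<lambda>\<omega>. if A \<omega> = c then 1 else 0) V borel (q c)"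
      using q_def c by blast
    note qc = cefM[OF M predS p1 c_q]
    show ?thesis using qc(3,5,6) by blast
  qed
  have q01: "(0::nat) \<in> {0,1}" "(1::nat) \<in> {0,1}" by auto
  have qm[measurable]: "q c \<in> borel_measurable borel" if "c \<in> {0,1}" for c using qfacts[OF that] by blast
  have q0m[measurable]: "q 0 \<in> borel_measurable borel" and q1m[measurable]: "q 1 \<in> borel_measurable borel"
    using qm by auto
  have qnn: "AE \<omega> in M. 0 \<le> q c (V \<omega>)" if c: "c \<in> {0,1}" for c
  proof -
    have qm': "q c \<in> borel_measurable borel" using qm[OF c] .
    note [measurable] = qm'
    have z: "(\<lambda>v. 0::real) \<in> borel_measurable borel" by (rule borel_measurable_const)
    have iz: "integrable M (\<lambda>\<omega>. indicator ?E1 \<omega> * (\<lambda>v. 0::real) (V \<omega>))" by simp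
    have "AE \<omega> in M. \<omega> \<in> ?E1 \<longrightarrow> (\<lambda>v. 0::real) (V \<omega>) \<le> q c (V \<omega>)"
    proof (rule ae_le_from_sets[OF V_m z qm' E1s iz])
      show "integrable M (\<lambda>\<omega>. indicator ?E1 \<omega> * q c (V \<omega>))" using qfacts[OF c] by blast
      show "\<forall>B\<in>sets borel. (\<integral>\<omega>. indicator ?E1 \<omega> * (indicator (V -` B \<inter> space M) \<omega> * (\<lambda>v. 0::real) (V \<omega>)) \<partial>M)
         \<le> (\<integral>\<omega>. indicator ?E1 \<omega> * (indicator (V -` B \<inter> space M) \<omega> * q c (V \<omega>)) \<partial>M)"
      proof
        fix B :: "(real^'k) set" assume B: "B \<in> sets borel"
        have "0 \<le> (\<integral>\<omega>. indicator ?E1 \<omega> * (indicator (V -` B \<inter> space M) \<omega> * (if A \<omega> = c then 1 else 0::real)) \<partial>M)"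
          by (rule integral_nonneg_AE) (auto split: split_indicator)
        moreover have "(\<integral>\<omega>. indicator ?E1 \<omega> * (indicator (V -` B \<inter> space M) \<omega> * (if A \<omega> = c then 1 else 0::real)) \<partial>M)
           = (\<integral>\<omega>. indicator ?E1 \<omega> * (indicator (V -` B \<inter> space M) \<omega> * q c (V \<omega>)) \<partial>M)"
          using bspec[OF conjunct1[OF qfacts[OF c]] B] .
        moreover have "(\<integral>\<omega>. indicator ?E1 \<omega> * (indicator (V -` B \<inter> space M) \<omega> * (\<lambda>v. 0::real) (V \<omega>)) \<partial>M) = 0"
          by simp
        ultimately show "(\<integral>\<omega>. indicator ?E1 \<omega> * (indicator (V -` B \<inter> space M) \<omega> * (\<lambda>v. 0::real) (V \<omega>)) \<partial>M)
         \<le> (\<integral>\<omega>. indicator ?E1 \<omega> * (indicator (V -` B \<inter> space M) \<omega> * q c (V \<omega>)) \<partial>M)"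
          by linarith
      qed
    qed
    then have "AE \<omega> in M. S \<omega> = 1 \<longrightarrow> 0 \<le> q c (V \<omega>)" using AE_space by eventually_elim auto
    then show ?thesis by (rule sel_tr[rotated]) measurable
  qed
  have qsum: "AE \<omega> in M. q 0 (V \<omega>) + q 1 (V \<omega>) = 1"
  proof -
    have iq0: "integrable M (\<lambda>\<omega>. indicator ?E1 \<omega> * q 0 (V \<omega>))" using qfacts[OF q01(1)] by blast
    have iq1: "integrable M (\<lambda>\<omega>. indicator ?E1 \<omega> * q 1 (V \<omega>))" using qfacts[OF q01(2)] by blast
    have gm: "(\<lambda>v. q 0 v + q 1 v) \<in> borel_measurable borel" using q0m q1m by (rule borel_measurable_add)
    have km: "(\<lambda>v. 1::real) \<in> borel_measurable borel" by (rule borel_measurable_const)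
    have ig: "integrable M (\<lambda>\<omega>. indicator ?E1 \<omega> * (q 0 (V \<omega>) + q 1 (V \<omega>)))"
      by (rule intE[OF Bochner_Integration.integrable_add[OF iq0 iq1]]) (simp add: algebra_simps)
    have ik: "integrable M (\<lambda>\<omega>. indicator ?E1 \<omega> * (\<lambda>v. 1::real) (V \<omega>))"
      by (rule intE[OF intI[OF E1s intc[of 1]]]) simp
    have EQ: "(\<integral>\<omega>. indicator ?E1 \<omega> * (indicator (V -` B \<inter> space M) \<omega> * (q 0 (V \<omega>) + q 1 (V \<omega>))) \<partial>M)
       = (\<integral>\<omega>. indicator ?E1 \<omega> * (indicator (V -` B \<inter> space M) \<omega> * (\<lambda>v. 1::real) (V \<omega>)) \<partial>M)"
      if B: "B \<in> sets borel" for B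
    proof -
      have VB: "V -` B \<inter> space M \<in> sets M" using V_m B by (rule measurable_sets)
      have i0: "integrable M (\<lambda>\<omega>. indicator ?E1 \<omega> * (indicator (V -` B \<inter> space M) \<omega> * q 0 (V \<omega>)))"
        by (rule intI2[OF E1s VB subset_refl iq0])
      have i1: "integrable M (\<lambda>\<omega>. indicator ?E1 \<omega> * (indicator (V -` B \<inter> space M) \<omega> * q 1 (V \<omega>)))"
        by (rule intI2[OF E1s VB subset_refl iq1])
      have j0: "integrable M (\<lambda>\<omega>. indicator ?E1 \<omega> * (indicator (V -` B \<inter> space M) \<omega> * (if A \<omega> = 0 then 1 else 0::real)))"
        by (rule intE[OF intI[OF sets.Int[OF Fs[of 0] VB] intc[of 1]]]) (auto split: split_indicator)
      have j1: "integrable M (\<lambda>\<omega>. indicator ?E1 \<omega> * (indicator (V -` B \<inter> space M) \<omega> * (if A \<omega> = 1 then 1 else 0::real)))"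
        by (rule intE[OF intI[OF sets.Int[OF Fs[of 1] VB] intc[of 1]]]) (auto split: split_indicator)
      have "(\<integral>\<omega>. indicator ?E1 \<omega> * (indicator (V -` B \<inter> space M) \<omega> * (q 0 (V \<omega>) + q 1 (V \<omega>))) \<partial>M)
          = (\<integral>\<omega>. indicator ?E1 \<omega> * (indicator (V -` B \<inter> space M) \<omega> * q 0 (V \<omega>))
             + indicator ?E1 \<omega> * (indicator (V -` B \<inter> space M) \<omega> * q 1 (V \<omega>)) \<partial>M)"
        by (rule Bochner_Integration.integral_cong[OF refl]) (simp add: algebra_simps)
      also have "\<dots> = (\<integral>\<omega>. indicator ?E1 \<omega> * (indicator (V -` B \<inter> space M) \<omega> * q 0 (V \<omega>)) \<partial>M)
             + (\<integral>\<omega>. indicator ?E1 \<omega> * (indicator (V -` B \<inter> space M) \<omega> * q 1 (V \<omega>)) \<partial>M)"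
        using i0 i1 by (rule Bochner_Integration.integral_add)
      also have "\<dots> = (\<integral>\<omega>. indicator ?E1 \<omega> * (indicator (V -` B \<inter> space M) \<omega> * (if A \<omega> = 0 then 1 else 0::real)) \<partial>M)
             + (\<integral>\<omega>. indicator ?E1 \<omega> * (indicator (V -` B \<inter> space M) \<omega> * (if A \<omega> = 1 then 1 else 0::real)) \<partial>M)"
        by (simp only: bspec[OF conjunct1[OF qfacts[OF q01(1)]] B] bspec[OF conjunct1[OF qfacts[OF q01(2)]] B])
      also have "\<dots> = (\<integral>\<omega>. indicator ?E1 \<omega> * (indicator (V -` B \<inter> space M) \<omega> * (if A \<omega> = 0 then 1 else 0::real))
             + indicator ?E1 \<omega> * (indicator (V -` B \<inter> space M) \<omega> * (if A \<omega> = 1 then 1 else 0::real)) \<partial>M)"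
        using j0 j1 by (rule Bochner_Integration.integral_add[symmetric])
      also have "\<dots> = (\<integral>\<omega>. indicator ?E1 \<omega> * (indicator (V -` B \<inter> space M) \<omega> * (\<lambda>v. 1::real) (V \<omega>)) \<partial>M)"
      proof (rule Bochner_Integration.integral_cong[OF refl])
        fix \<omega> assume "\<omega> \<in> space M"
        then have "A \<omega> = 0 \<or> A \<omega> = 1" using A_bin by auto
        then show "indicator ?E1 \<omega> * (indicator (V -` B \<inter> space M) \<omega> * (if A \<omega> = 0 then 1 else 0::real))
             + indicator ?E1 \<omega> * (indicator (V -` B \<inter> space M) \<omega> * (if A \<omega> = 1 then 1 else 0::real))
           = indicator ?E1 \<omega> * (indicator (V -` B \<inter> space M) \<omega> * (\<lambda>v. 1::real) (V \<omega>))" by auto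
      qed
      finally show ?thesis .
    qed
    have a1: "AE \<omega> in M. \<omega> \<in> ?E1 \<longrightarrow> q 0 (V \<omega>) + q 1 (V \<omega>) \<le> (\<lambda>v. 1::real) (V \<omega>)"
      by (rule ae_le_from_sets[OF V_m gm km E1s ig ik]) (use EQ in simp)
    have a2: "AE \<omega> in M. \<omega> \<in> ?E1 \<longrightarrow> (\<lambda>v. 1::real) (V \<omega>) \<le> q 0 (V \<omega>) + q 1 (V \<omega>)"
      by (rule ae_le_from_sets[OF V_m km gm E1s ik ig]) (use EQ in simp)
    have "AE \<omega> in M. S \<omega> = 1 \<longrightarrow> q 0 (V \<omega>) + q 1 (V \<omega>) = 1" using a1 a2 AE_space by eventually_elim auto
    then show ?thesis by (rule sel_tr[rotated]) measurable
  qed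
  have qbd0: "AE \<omega> in M. 0 \<le> q 0 (V \<omega>) \<and> q 0 (V \<omega>) \<le> 1"
    using qnn[OF q01(1)] qnn[OF q01(2)] qsum by eventually_elim auto
  have qbd1: "AE \<omega> in M. 0 \<le> q 1 (V \<omega>) \<and> q 1 (V \<omega>) \<le> 1"
    using qnn[OF q01(1)] qnn[OF q01(2)] qsum by eventually_elim auto
  have qbd: "AE \<omega> in M. 0 \<le> q c (V \<omega>) \<and> q c (V \<omega>) \<le> 1" if c: "c \<in> {0,1}" for c
    using c qbd0 qbd1 by auto
  have qint: "integrable M (\<lambda>\<omega>. q c (V \<omega>))" if c: "c \<in> {0,1}" for c
  proof (rule Bochner_Integration.integrable_bound[OF intc[of 1]])
    note [measurable] = qm[OF c]
    show "(\<lambda>\<omega>. q c (V \<omega>)) \<in> borel_measurable M" by measurable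
    show "AE \<omega> in M. norm (q c (V \<omega>)) \<le> norm (1::real)"
      using qbd[OF c] by eventually_elim auto
  qed
  have UNIVs: "UNIV \<in> sets (borel :: (real^'k) measure)" by simp
  have VU: "V -` UNIV \<inter> space M = space M" by simp
  have P0: "measure M ?E0 > 0" by (rule p0)
  have E0int: "integrable M (indicator ?E0 :: 'o \<Rightarrow> real)"
    by (rule intE[OF intI[OF E0s intc[of 1]]]) simp
  have E0meas: "(\<integral>\<omega>. indicator ?E0 \<omega> \<partial>M) = measure M ?E0" by simp
  have fin: "integrable M (\<lambda>\<omega>. tau a (V \<omega>)) \<and>
      (\<integral>\<omega>. Ypot a \<omega> \<partial>M) \<ge> (\<integral>\<omega>. tau a (V \<omega>) \<partial>M) - \<delta>1 * (\<integral>\<omega>. q b (V \<omega>) \<partial>M) - \<delta>2 * measure M ?E0 \<and>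
      (\<integral>\<omega>. Ypot a \<omega> \<partial>M) \<le> (\<integral>\<omega>. tau a (V \<omega>) \<partial>M) + \<delta>1 * (\<integral>\<omega>. q b (V \<omega>) \<partial>M) + \<delta>2 * measure M ?E0 \<and>
      (\<integral>\<omega>. Ypot a \<omega> \<partial>condM M (\<lambda>\<omega>. S \<omega> = 0)) \<ge> (\<integral>\<omega>. tau a (V \<omega>) \<partial>condM M (\<lambda>\<omega>. S \<omega> = 0))
          - \<delta>1 * (\<integral>\<omega>. q b (V \<omega>) \<partial>condM M (\<lambda>\<omega>. S \<omega> = 0)) - \<delta>2 \<and>
      (\<integral>\<omega>. Ypot a \<omega> \<partial>condM M (\<lambda>\<omega>. S \<omega> = 0)) \<le> (\<integral>\<omega>. tau a (V \<omega>) \<partial>condM M (\<lambda>\<omega>. S \<omega> = 0))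
          + \<delta>1 * (\<integral>\<omega>. q b (V \<omega>) \<partial>condM M (\<lambda>\<omega>. S \<omega> = 0)) + \<delta>2"
    if a: "a \<in> {0,1}" and bdef: "b = 1 - a" for a b
  proof -
    have ab: "b \<in> {0,1}" using a bdef by auto
    have Yi: "integrable M (Ypot a)" using Ypot_int a by blast
    have Ym: "Ypot a \<in> borel_measurable M" using Yi by (rule borel_measurable_integrable)
    have c_n1: "is_cond_exp_fn (condM M (\<lambda>\<omega>. S \<omega> = 1)) (Ypot a) V borel (n a 1)"
      using n_def a by blast
    note na1 = cefM[OF M predS p1 c_n1]
    have c_n0: "is_cond_exp_fn (condM M (\<lambda>\<omega>. S \<omega> = 0)) (Ypot a) V borel (n a 0)"
      using n_def a by blast
    note na0 = cefM[OF M predS p0 c_n0]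
    have c_tau: "is_cond_exp_fn (condM M (\<lambda>\<omega>. S \<omega> = 1)) (\<lambda>\<omega>. mu a (X \<omega>)) V borel (tau a)"
      using tau_def a by blast
    note taua = cefM[OF M predS p1 c_tau]
    note [measurable] = na1(3) na0(3) taua(3) qm[OF ab]
    have qi: "integrable M (\<lambda>\<omega>. q b (V \<omega>))" using qint[OF ab] .
    define W where "W = (\<lambda>\<omega>. indicator ?E1 \<omega> * n a 1 (V \<omega>) + indicator ?E0 \<omega> * n a 0 (V \<omega>))"
    have Wi: "integrable M W" unfolding W_def using na1(5) na0(5) by (rule Bochner_Integration.integrable_add)
    have b2: "AE \<omega> in M. \<bar>n a 0 (V \<omega>) - n a 1 (V \<omega>)\<bar> \<le> \<delta>2" using bound2 a by blast
    have cr: "AE \<omega> in M. \<bar>n a 1 (V \<omega>) - tau a (V \<omega>)\<bar> \<le> \<delta>1 * q b (V \<omega>)"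
      using core[OF a] bdef by simp
    have AEW: "AE \<omega> in M. \<bar>W \<omega> - tau a (V \<omega>)\<bar> \<le> \<delta>1 * q b (V \<omega>) + \<delta>2 * indicator ?E0 \<omega>"
      using b2 cr AE_space
    proof eventually_elim
      case (elim \<omega>)
      then have "S \<omega> = 0 \<or> S \<omega> = 1" using S01 by blast
      then show ?case using elim by (auto simp: W_def abs_le_iff)
    qed
    have taui: "integrable M (\<lambda>\<omega>. tau a (V \<omega>))"
    proof (rule Bochner_Integration.integrable_bound)
      show "integrable M (\<lambda>\<omega>. \<bar>W \<omega>\<bar> + (\<delta>1 + \<delta>2))"
        using integrable_abs[OF Wi] intc by (rule Bochner_Integration.integrable_add)
      show "(\<lambda>\<omega>. tau a (V \<omega>)) \<in> borel_measurable M" by measurable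
      show "AE \<omega> in M. norm (tau a (V \<omega>)) \<le> norm (\<bar>W \<omega>\<bar> + (\<delta>1 + \<delta>2))"
        using AEW qbd[OF ab]
      proof eventually_elim
        case (elim \<omega>)
        have "\<delta>1 * q b (V \<omega>) \<le> \<delta>1" using elim(2) d1_pos by (simp add: mult_left_le)
        moreover have "\<delta>2 * indicator ?E0 \<omega> \<le> \<delta>2" using d2_pos by (simp split: split_indicator)
        ultimately have "\<bar>tau a (V \<omega>)\<bar> \<le> \<bar>W \<omega>\<bar> + (\<delta>1 + \<delta>2)"
          using absb[OF elim(1)] by linarith
        then show ?case using d1_pos d2_pos by simp
      qed
    qed
    have Yd: "(\<integral>\<omega>. Ypot a \<omega> \<partial>M) = (\<integral>\<omega>. indicator ?E1 \<omega> * Ypot a \<omega> + indicator ?E0 \<omega> * Ypot a \<omega> \<partial>M)"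
    proof (rule Bochner_Integration.integral_cong[OF refl])
      fix \<omega> assume "\<omega> \<in> space M"
      then have "S \<omega> = 0 \<or> S \<omega> = 1" using S01 by blast
      then show "Ypot a \<omega> = indicator ?E1 \<omega> * Ypot a \<omega> + indicator ?E0 \<omega> * Ypot a \<omega>"
        using \<open>\<omega> \<in> space M\<close> by (auto split: split_indicator)
    qed
    have e1: "(\<integral>\<omega>. indicator ?E1 \<omega> * Ypot a \<omega> \<partial>M) = (\<integral>\<omega>. indicator ?E1 \<omega> * n a 1 (V \<omega>) \<partial>M)"
      using bspec[OF na1(6) UNIVs] unfolding VU int_space .
    have e0: "(\<integral>\<omega>. indicator ?E0 \<omega> * Ypot a \<omega> \<partial>M) = (\<integral>\<omega>. indicator ?E0 \<omega> * n a 0 (V \<omega>) \<partial>M)"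
      using bspec[OF na0(6) UNIVs] unfolding VU int_space .
    have psiW: "(\<integral>\<omega>. Ypot a \<omega> \<partial>M) = integral\<^sup>L M W"
      unfolding Yd Bochner_Integration.integral_add[OF na1(1) na0(1)] e1 e0 W_def
      using Bochner_Integration.integral_add[OF na1(5) na0(5)] by simp
    have ir: "integrable M (\<lambda>\<omega>. \<delta>1 * q b (V \<omega>) + \<delta>2 * indicator ?E0 \<omega>)"
      using integrable_mult_right[OF qi, of \<delta>1] integrable_mult_right[OF E0int, of \<delta>2]
      by (rule Bochner_Integration.integrable_add)
    have ir_eq: "(\<integral>\<omega>. \<delta>1 * q b (V \<omega>) + \<delta>2 * indicator ?E0 \<omega> \<partial>M)
        = \<delta>1 * (\<integral>\<omega>. q b (V \<omega>) \<partial>M) + \<delta>2 * measure M ?E0"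
      using Bochner_Integration.integral_add[OF integrable_mult_right[OF qi, of \<delta>1] integrable_mult_right[OF E0int, of \<delta>2]]
      by (simp add: E0meas)
    have up: "integral\<^sup>L M W \<le> (\<integral>\<omega>. tau a (V \<omega>) + (\<delta>1 * q b (V \<omega>) + \<delta>2 * indicator ?E0 \<omega>) \<partial>M)"
      using Wi Bochner_Integration.integrable_add[OF taui ir]
      by (rule integral_mono_AE) (use AEW in \<open>eventually_elim, auto simp: abs_le_iff\<close>)
    have lo: "(\<integral>\<omega>. tau a (V \<omega>) - (\<delta>1 * q b (V \<omega>) + \<delta>2 * indicator ?E0 \<omega>) \<partial>M) \<le> integral\<^sup>L M W"
      using Bochner_Integration.integrable_diff[OF taui ir] Wi
      by (rule integral_mono_AE) (use AEW in \<open>eventually_elim, auto simp: abs_le_iff\<close>)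
    have up': "(\<integral>\<omega>. tau a (V \<omega>) + (\<delta>1 * q b (V \<omega>) + \<delta>2 * indicator ?E0 \<omega>) \<partial>M)
        = (\<integral>\<omega>. tau a (V \<omega>) \<partial>M) + (\<delta>1 * (\<integral>\<omega>. q b (V \<omega>) \<partial>M) + \<delta>2 * measure M ?E0)"
      using Bochner_Integration.integral_add[OF taui ir] ir_eq by simp
    have lo': "(\<integral>\<omega>. tau a (V \<omega>) - (\<delta>1 * q b (V \<omega>) + \<delta>2 * indicator ?E0 \<omega>) \<partial>M)
        = (\<integral>\<omega>. tau a (V \<omega>) \<partial>M) - (\<delta>1 * (\<integral>\<omega>. q b (V \<omega>) \<partial>M) + \<delta>2 * measure M ?E0)"
      using Bochner_Integration.integral_diff[OF taui ir] ir_eq by simp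
    have tauVm: "(\<lambda>\<omega>. tau a (V \<omega>)) \<in> borel_measurable M" by measurable
    have qVm: "(\<lambda>\<omega>. q b (V \<omega>)) \<in> borel_measurable M" by measurable
    have th1: "(\<integral>\<omega>. Ypot a \<omega> \<partial>condM M (\<lambda>\<omega>. S \<omega> = 0)) = (\<integral>\<omega>. indicator ?E0 \<omega> * n a 0 (V \<omega>) \<partial>M) / measure M ?E0"
      using condM_int(1)[OF M predS p0 Ym] e0 by simp
    have th2: "(\<integral>\<omega>. tau a (V \<omega>) \<partial>condM M (\<lambda>\<omega>. S \<omega> = 0)) = (\<integral>\<omega>. indicator ?E0 \<omega> * tau a (V \<omega>) \<partial>M) / measure M ?E0"
      using condM_int(1)[OF M predS p0 tauVm] .
    have th3: "(\<integral>\<omega>. q b (V \<omega>) \<partial>condM M (\<lambda>\<omega>. S \<omega> = 0)) = (\<integral>\<omega>. indicator ?E0 \<omega> * q b (V \<omega>) \<partial>M) / measure M ?E0"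
      using condM_int(1)[OF M predS p0 qVm] .
    have i0t: "integrable M (\<lambda>\<omega>. indicator ?E0 \<omega> * tau a (V \<omega>))" using intI[OF E0s taui] .
    have i0q: "integrable M (\<lambda>\<omega>. indicator ?E0 \<omega> * q b (V \<omega>))" using intI[OF E0s qi] .
    have i0r: "integrable M (\<lambda>\<omega>. \<delta>1 * (indicator ?E0 \<omega> * q b (V \<omega>)) + \<delta>2 * indicator ?E0 \<omega>)"
      using integrable_mult_right[OF i0q, of \<delta>1] integrable_mult_right[OF E0int, of \<delta>2]
      by (rule Bochner_Integration.integrable_add)
    have i0r_eq: "(\<integral>\<omega>. \<delta>1 * (indicator ?E0 \<omega> * q b (V \<omega>)) + \<delta>2 * indicator ?E0 \<omega> \<partial>M)
        = \<delta>1 * (\<integral>\<omega>. indicator ?E0 \<omega> * q b (V \<omega>) \<partial>M) + \<delta>2 * measure M ?E0"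
      using Bochner_Integration.integral_add[OF integrable_mult_right[OF i0q, of \<delta>1] integrable_mult_right[OF E0int, of \<delta>2]]
      by (simp add: E0meas)
    have AE0: "AE \<omega> in M. \<bar>indicator ?E0 \<omega> * n a 0 (V \<omega>) - indicator ?E0 \<omega> * tau a (V \<omega>)\<bar>
        \<le> \<delta>1 * (indicator ?E0 \<omega> * q b (V \<omega>)) + \<delta>2 * indicator ?E0 \<omega>"
      using AEW by eventually_elim (auto simp: W_def split: split_indicator)
    have up0: "(\<integral>\<omega>. indicator ?E0 \<omega> * n a 0 (V \<omega>) \<partial>M)
        \<le> (\<integral>\<omega>. indicator ?E0 \<omega> * tau a (V \<omega>) + (\<delta>1 * (indicator ?E0 \<omega> * q b (V \<omega>)) + \<delta>2 * indicator ?E0 \<omega>) \<partial>M)"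
      using na0(5) Bochner_Integration.integrable_add[OF i0t i0r]
      by (rule integral_mono_AE) (use AE0 in \<open>eventually_elim, auto simp: abs_le_iff\<close>)
    have lo0: "(\<integral>\<omega>. indicator ?E0 \<omega> * tau a (V \<omega>) - (\<delta>1 * (indicator ?E0 \<omega> * q b (V \<omega>)) + \<delta>2 * indicator ?E0 \<omega>) \<partial>M)
        \<le> (\<integral>\<omega>. indicator ?E0 \<omega> * n a 0 (V \<omega>) \<partial>M)"
      using Bochner_Integration.integrable_diff[OF i0t i0r] na0(5)
      by (rule integral_mono_AE) (use AE0 in \<open>eventually_elim, auto simp: abs_le_iff\<close>)
    have up0': "(\<integral>\<omega>. indicator ?E0 \<omega> * tau a (V \<omega>) + (\<delta>1 * (indicator ?E0 \<omega> * q b (V \<omega>)) + \<delta>2 * indicator ?E0 \<omega>) \<partial>M)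
        = (\<integral>\<omega>. indicator ?E0 \<omega> * tau a (V \<omega>) \<partial>M) + (\<delta>1 * (\<integral>\<omega>. indicator ?E0 \<omega> * q b (V \<omega>) \<partial>M) + \<delta>2 * measure M ?E0)"
      using Bochner_Integration.integral_add[OF i0t i0r] i0r_eq by simp
    have lo0': "(\<integral>\<omega>. indicator ?E0 \<omega> * tau a (V \<omega>) - (\<delta>1 * (indicator ?E0 \<omega> * q b (V \<omega>)) + \<delta>2 * indicator ?E0 \<omega>) \<partial>M)
        = (\<integral>\<omega>. indicator ?E0 \<omega> * tau a (V \<omega>) \<partial>M) - (\<delta>1 * (\<integral>\<omega>. indicator ?E0 \<omega> * q b (V \<omega>) \<partial>M) + \<delta>2 * measure M ?E0)"
      using Bochner_Integration.integral_diff[OF i0t i0r] i0r_eq by simp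
    have T1: "(\<integral>\<omega>. Ypot a \<omega> \<partial>condM M (\<lambda>\<omega>. S \<omega> = 0)) \<le> (\<integral>\<omega>. tau a (V \<omega>) \<partial>condM M (\<lambda>\<omega>. S \<omega> = 0))
          + \<delta>1 * (\<integral>\<omega>. q b (V \<omega>) \<partial>condM M (\<lambda>\<omega>. S \<omega> = 0)) + \<delta>2"
      unfolding th1 th2 th3 by (rule divb1[OF _ P0]) (use up0 up0' in linarith)
    have T2: "(\<integral>\<omega>. Ypot a \<omega> \<partial>condM M (\<lambda>\<omega>. S \<omega> = 0)) \<ge> (\<integral>\<omega>. tau a (V \<omega>) \<partial>condM M (\<lambda>\<omega>. S \<omega> = 0))
          - \<delta>1 * (\<integral>\<omega>. q b (V \<omega>) \<partial>condM M (\<lambda>\<omega>. S \<omega> = 0)) - \<delta>2"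
      unfolding th1 th2 th3 by (rule divb2[OF _ P0]) (use lo0 lo0' in linarith)
    show ?thesis using taui psiW up up' lo lo' T1 T2 by linarith
  qed
  have q01': "(0::nat) = 1 - 1" "(1::nat) = 1 - 0" by simp_all
  note f0 = fin[OF q01(1) q01'(2)]
  note f1 = fin[OF q01(2) q01'(1)]
  have part1: "\<forall>a\<in>{0, 1}.
            (\<integral>\<omega>. Ypot a \<omega> \<partial>M) \<in>
              {(\<integral>\<omega>. tau a (V \<omega>) \<partial>M) - \<delta>1 * (\<integral>\<omega>. q (1 - a) (V \<omega>) \<partial>M)
                 - \<delta>2 * measure M {\<omega> \<in> space M. S \<omega> = 0} ..
               (\<integral>\<omega>. tau a (V \<omega>) \<partial>M) + \<delta>1 * (\<integral>\<omega>. q (1 - a) (V \<omega>) \<partial>M)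
                 + \<delta>2 * measure M {\<omega> \<in> space M. S \<omega> = 0}} \<and>
            (\<integral>\<omega>. Ypot a \<omega> \<partial>condM M (\<lambda>\<omega>. S \<omega> = 0)) \<in>
              {(\<integral>\<omega>. tau a (V \<omega>) \<partial>condM M (\<lambda>\<omega>. S \<omega> = 0))
                 - \<delta>1 * (\<integral>\<omega>. q (1 - a) (V \<omega>) \<partial>condM M (\<lambda>\<omega>. S \<omega> = 0)) - \<delta>2 ..
               (\<integral>\<omega>. tau a (V \<omega>) \<partial>condM M (\<lambda>\<omega>. S \<omega> = 0))
                 + \<delta>1 * (\<integral>\<omega>. q (1 - a) (V \<omega>) \<partial>condM M (\<lambda>\<omega>. S \<omega> = 0)) + \<delta>2}"
  proof
    fix a :: nat assume a: "a \<in> {0,1}"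
    show "(\<integral>\<omega>. Ypot a \<omega> \<partial>M) \<in>
              {(\<integral>\<omega>. tau a (V \<omega>) \<partial>M) - \<delta>1 * (\<integral>\<omega>. q (1 - a) (V \<omega>) \<partial>M)
                 - \<delta>2 * measure M {\<omega> \<in> space M. S \<omega> = 0} ..
               (\<integral>\<omega>. tau a (V \<omega>) \<partial>M) + \<delta>1 * (\<integral>\<omega>. q (1 - a) (V \<omega>) \<partial>M)
                 + \<delta>2 * measure M {\<omega> \<in> space M. S \<omega> = 0}} \<and>
            (\<integral>\<omega>. Ypot a \<omega> \<partial>condM M (\<lambda>\<omega>. S \<omega> = 0)) \<in>
              {(\<integral>\<omega>. tau a (V \<omega>) \<partial>condM M (\<lambda>\<omega>. S \<omega> = 0))
                 - \<delta>1 * (\<integral>\<omega>. q (1 - a) (V \<omega>) \<partial>condM M (\<lambda>\<omega>. S \<omega> = 0)) - \<delta>2 ..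
               (\<integral>\<omega>. tau a (V \<omega>) \<partial>condM M (\<lambda>\<omega>. S \<omega> = 0))
                 + \<delta>1 * (\<integral>\<omega>. q (1 - a) (V \<omega>) \<partial>condM M (\<lambda>\<omega>. S \<omega> = 0)) + \<delta>2}"
      using fin[OF a refl] unfolding atLeastAtMost_iff by blast
  qed
  have qi0: "integrable M (\<lambda>\<omega>. q 0 (V \<omega>))" using qint[OF q01(1)] .
  have qi1: "integrable M (\<lambda>\<omega>. q 1 (V \<omega>))" using qint[OF q01(2)] .
  have qsM: "(\<integral>\<omega>. q 0 (V \<omega>) \<partial>M) + (\<integral>\<omega>. q 1 (V \<omega>) \<partial>M) = 1"
  proof -
    have "(\<integral>\<omega>. q 0 (V \<omega>) \<partial>M) + (\<integral>\<omega>. q 1 (V \<omega>) \<partial>M) = (\<integral>\<omega>. q 0 (V \<omega>) + q 1 (V \<omega>) \<partial>M)"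
      using Bochner_Integration.integral_add[OF qi0 qi1] by simp
    also have "\<dots> = (\<integral>\<omega>. 1 \<partial>M)"
      by (rule integral_cong_AE) (use qsum in \<open>measurable\<close>)
    finally show ?thesis by (simp add: prob_space)
  qed
  have qs0: "(\<integral>\<omega>. q 0 (V \<omega>) \<partial>condM M (\<lambda>\<omega>. S \<omega> = 0)) + (\<integral>\<omega>. q 1 (V \<omega>) \<partial>condM M (\<lambda>\<omega>. S \<omega> = 0)) = 1"
  proof -
    have m0: "(\<lambda>\<omega>. q 0 (V \<omega>)) \<in> borel_measurable M" by measurable
    have m1: "(\<lambda>\<omega>. q 1 (V \<omega>)) \<in> borel_measurable M" by measurable
    have j0: "integrable M (\<lambda>\<omega>. indicator ?E0 \<omega> * q 0 (V \<omega>))" using intI[OF E0s qi0] .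
    have j1: "integrable M (\<lambda>\<omega>. indicator ?E0 \<omega> * q 1 (V \<omega>))" using intI[OF E0s qi1] .
    have "(\<integral>\<omega>. indicator ?E0 \<omega> * q 0 (V \<omega>) \<partial>M) + (\<integral>\<omega>. indicator ?E0 \<omega> * q 1 (V \<omega>) \<partial>M)
        = (\<integral>\<omega>. indicator ?E0 \<omega> * q 0 (V \<omega>) + indicator ?E0 \<omega> * q 1 (V \<omega>) \<partial>M)"
      using Bochner_Integration.integral_add[OF j0 j1] by simp
    also have "\<dots> = (\<integral>\<omega>. indicator ?E0 \<omega> \<partial>M)"
    proof (rule integral_cong_AE)
      show "AE \<omega> in M. indicator ?E0 \<omega> * q 0 (V \<omega>) + indicator ?E0 \<omega> * q 1 (V \<omega>) = indicator ?E0 \<omega>"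
        using qsum
      proof eventually_elim
        case (elim \<omega>)
        have "indicator ?E0 \<omega> * q 0 (V \<omega>) + indicator ?E0 \<omega> * q 1 (V \<omega>)
            = indicator ?E0 \<omega> * (q 0 (V \<omega>) + q 1 (V \<omega>))" by (rule distrib_left[symmetric])
        also have "\<dots> = indicator ?E0 \<omega>" using elim by simp
        finally show ?case .
      qed
    qed (use E0s in measurable)
    also have "\<dots> = measure M ?E0" by (rule E0meas)
    finally have "(\<integral>\<omega>. indicator ?E0 \<omega> * q 0 (V \<omega>) \<partial>M) + (\<integral>\<omega>. indicator ?E0 \<omega> * q 1 (V \<omega>) \<partial>M) = measure M ?E0" .
    then show ?thesis
      unfolding condM_int(1)[OF M predS p0 m0] condM_int(1)[OF M predS p0 m1]
      using P0 by (simp add: add_divide_distrib[symmetric])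
  qed
  have ti0: "integrable M (\<lambda>\<omega>. tau 0 (V \<omega>))" using f0 by blast
  have ti1: "integrable M (\<lambda>\<omega>. tau 1 (V \<omega>))" using f1 by blast
  have tdM: "(\<integral>\<omega>. tau 1 (V \<omega>) - tau 0 (V \<omega>) \<partial>M) = (\<integral>\<omega>. tau 1 (V \<omega>) \<partial>M) - (\<integral>\<omega>. tau 0 (V \<omega>) \<partial>M)"
    using ti1 ti0 by (rule Bochner_Integration.integral_diff)
  have td0: "(\<integral>\<omega>. tau 1 (V \<omega>) - tau 0 (V \<omega>) \<partial>condM M (\<lambda>\<omega>. S \<omega> = 0))
      = (\<integral>\<omega>. tau 1 (V \<omega>) \<partial>condM M (\<lambda>\<omega>. S \<omega> = 0)) - (\<integral>\<omega>. tau 0 (V \<omega>) \<partial>condM M (\<lambda>\<omega>. S \<omega> = 0))"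
  proof -
    have m0: "(\<lambda>\<omega>. tau 0 (V \<omega>)) \<in> borel_measurable M" using ti0 by (rule borel_measurable_integrable)
    have m1: "(\<lambda>\<omega>. tau 1 (V \<omega>)) \<in> borel_measurable M" using ti1 by (rule borel_measurable_integrable)
    have md: "(\<lambda>\<omega>. tau 1 (V \<omega>) - tau 0 (V \<omega>)) \<in> borel_measurable M" using m1 m0 by (rule borel_measurable_diff)
    have j0: "integrable M (\<lambda>\<omega>. indicator ?E0 \<omega> * tau 0 (V \<omega>))" using intI[OF E0s ti0] .
    have j1: "integrable M (\<lambda>\<omega>. indicator ?E0 \<omega> * tau 1 (V \<omega>))" using intI[OF E0s ti1] .
    have "(\<integral>\<omega>. indicator ?E0 \<omega> * (tau 1 (V \<omega>) - tau 0 (V \<omega>)) \<partial>M)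
        = (\<integral>\<omega>. indicator ?E0 \<omega> * tau 1 (V \<omega>) - indicator ?E0 \<omega> * tau 0 (V \<omega>) \<partial>M)"
      by (rule Bochner_Integration.integral_cong[OF refl]) (simp add: algebra_simps)
    also have "\<dots> = (\<integral>\<omega>. indicator ?E0 \<omega> * tau 1 (V \<omega>) \<partial>M) - (\<integral>\<omega>. indicator ?E0 \<omega> * tau 0 (V \<omega>) \<partial>M)"
      using j1 j0 by (rule Bochner_Integration.integral_diff)
    finally have "(\<integral>\<omega>. indicator ?E0 \<omega> * (tau 1 (V \<omega>) - tau 0 (V \<omega>)) \<partial>M)
        = (\<integral>\<omega>. indicator ?E0 \<omega> * tau 1 (V \<omega>) \<partial>M) - (\<integral>\<omega>. indicator ?E0 \<omega> * tau 0 (V \<omega>) \<partial>M)" .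
    then show ?thesis
      unfolding condM_int(1)[OF M predS p0 m0] condM_int(1)[OF M predS p0 m1] condM_int(1)[OF M predS p0 md]
      by (simp add: diff_divide_distrib)
  qed
  have d2m: "2 * \<delta>2 * measure M ?E0 = 2 * (\<delta>2 * measure M ?E0)" by simp
  have qsM': "\<delta>1 * (\<integral>\<omega>. q 0 (V \<omega>) \<partial>M) + \<delta>1 * (\<integral>\<omega>. q 1 (V \<omega>) \<partial>M) = \<delta>1"
    using qsM by (simp add: distrib_left[symmetric])
  have qs0': "\<delta>1 * (\<integral>\<omega>. q 0 (V \<omega>) \<partial>condM M (\<lambda>\<omega>. S \<omega> = 0)) + \<delta>1 * (\<integral>\<omega>. q 1 (V \<omega>) \<partial>condM M (\<lambda>\<omega>. S \<omega> = 0)) = \<delta>1"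
    using qs0 by (simp add: distrib_left[symmetric])
  show ?thesis
    unfolding atLeastAtMost_iff
    using part1 f0 f1 tdM td0 d2m qsM' qs0'
    by (simp only: atLeastAtMost_iff) linarith
qed

end
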